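(* Let $F$ be a safe sentence and let $\mathbf c$ be a nonempty finite set of object constants containing every object constant occurring in $F$. Then the equivalence $\mathrm{Ground}_{\mathbf c}[F]\leftrightarrow F$ is derivable from $\mathit{SPP}_{\mathbf c}$ in $\mathbf{INT}^=+\mathrm{DE}$.
   Context: Formulas are first-order formulas over a signature with object constants, predicate constants and equality, but no function constants of arity $>0$. The primitive connectives are $\bot,\land,\lor,\rightarrow$ and the quantifiers $\forall,\exists$; $\neg F$ abbreviates $F\rightarrow\bot$, $\top$ abbreviates $\bot\rightarrow\bot$, $F\leftrightarrow G$ abbreviates $(F\rightarrow G)\land(G\rightarrow F)$. A sentence is a formula without free variables. Restricted variables: for quantifier-free $G$, $\mathrm{RV}(G)$ is: $\emptyset$ if $G$ is an equality between two variables; the set of variables of $G$ if $G$ is any other atomic formula; $\mathrm{RV}(\bot)=\emptyset$; $\mathrm{RV}(G\land H)=\mathrm{RV}(G)\cup\mathrm{RV}(H)$; $\mathrm{RV}(G\lor H)=\mathrm{RV}(G)\cap\mathrm{RV}(H)$; $\mathrm{RV}(G\rightarrow H)=\emptyset$. An occurrence of a subformula or variable in a formula is positive if the number of implications containing it in their antecedent is even, negative otherwise, and strictly positive if it is in the antecedent of no implication. A prenex sentence $Q_1x_1\cdots Q_nx_nM$ ($M$ quantifier-free, $x_i$ distinct) is semi-safe if every strictly positive occurrence of every $x_i$ in $M$ belongs to a subformula $G\rightarrow H$ with $x_i\in\mathrm{RV}(G)$. Simplification transformations: $\neg\bot\mapsto\top$, $\neg\top\mapsto\bot$; $\bot\land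 G\mapsto\bot$, $G\land\bot\mapsto\bot$, $\top\land G\mapsto G$, $G\land\top\mapsto G$; $\bot\lor G\mapsto G$, $G\lor\bot\mapsto G$, $\top\lor G\mapsto\top$, $G\lor\top\mapsto\top$; $\bot\rightarrow G\mapsto\top$, $G\rightarrow\top\mapsto\top$, $\top\rightarrow G\mapsto G$. A variable $x$ is positively (resp. negatively) weakly restricted in a quantifier-free formula $G$ if the formula obtained from $G$ by first replacing every atomic formula $A$ of $G$ with $x\in\mathrm{RV}(A)$ by $\bot$ and then applying the simplification transformations is $\top$ (resp. $\bot$). A semi-safe prenex sentence $Q_1x_1\cdots Q_nx_nM$ is safe if for every occurrence of every variable $x_i$: (a) if $Q_i=\forall$, the occurrence belongs to a positive subformula (of the sentence) in which $x_i$ is positively weakly restricted, or to a negative subformula in which $x_i$ is negatively weakly restricted; (b) if $Q_i=\exists$, the occurrence belongs to a negative subformula in which $x_i$ is positively weakly restricted, or to a positive subformula in which $x_i$ is negatively weakly restricted. For a finite set $\mathbf c$ of object constants, $\mathit{in}_{\mathbf c}(x_1,\dots,x_m)$ is $\bigwedge_{1\le j\le m}\bigvee_{c\in\mathbf c}x_j=c$, and $\mathit{SPP}_{\mathbf c}$ is the conjunction of $\forall\mathbf x(p_i(\mathbf x)\rightarrow\mathit{in}_{\mathbf c}(\mathbf x))$ over all predicate constants $p_i$ occurring in $F$. For a prenex sentence $F$ and nonempty finite $\mathbf c$, $\mathrm{Ground}_{\mathbf c}[F]$ is: $F$ if $F$ is quantifier-free; $\mathrm{Ground}_{\mathbf c}[\forall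 xG(x)]=\bigwedge_{c\in\mathbf c}\mathrm{Ground}_{\mathbf c}[G(c)]$; $\mathrm{Ground}_{\mathbf c}[\exists xG(x)]=\bigvee_{c\in\mathbf c}\mathrm{Ground}_{\mathbf c}[G(c)]$. $\mathbf{INT}^=$ is intuitionistic predicate logic with equality, and $\mathrm{DE}$ is the decidable equality axiom $x=y\lor x\neq y$. *)

theory Defs
  imports Main
begin

text \<open>Object constants have type 'c, predicate constants type 'p; variables are
  natural numbers.  A predicate constant is identified with a pair (name, arity).\<close>

datatype 'c trm = Var nat | Cst 'c

datatype ('c, 'p) form =
    FBot
  | Atom 'p "'c trm list"
  | Eq "'c trm" "'c trm"
  | And "('c, 'p) form" "('c, 'p) form"
  | Or  "('c, 'p) form" "('c, 'p) form"
  | Imp "('c, 'p) form" "('c, 'p) form"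
  | All nat "('c, 'p) form"
  | Ex  nat "('c, 'p) form"

abbreviation FTop :: "('c, 'p) form" where "FTop \<equiv> Imp FBot FBot"
abbreviation Neg :: "('c, 'p) form \<Rightarrow> ('c, 'p) form" where "Neg A \<equiv> Imp A FBot"
abbreviation Iff :: "('c, 'p) form \<Rightarrow> ('c, 'p) form \<Rightarrow> ('c, 'p) form" where
  "Iff A B \<equiv> And (Imp A B) (Imp B A)"

fun vars_trm :: "'c trm \<Rightarrow> nat set" where
  "vars_trm (Var x) = {x}"
| "vars_trm (Cst c) = {}"

fun consts_trm :: "'c trm \<Rightarrow> 'c set" where
  "consts_trm (Var x) = {}"
| "consts_trm (Cst c) = {c}"

fun fv :: "('c, 'p) form \<Rightarrow> nat set" where
  "fv FBot = {}"
| "fv (Atom p ts) = (\<Union>t\<in>set ts. vars_trm t)"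
| "fv (Eq s t) = vars_trm s \<union> vars_trm t"
| "fv (And A B) = fv A \<union> fv B"
| "fv (Or A B) = fv A \<union> fv B"
| "fv (Imp A B) = fv A \<union> fv B"
| "fv (All x A) = fv A - {x}"
| "fv (Ex x A) = fv A - {x}"

fun consts_form :: "('c, 'p) form \<Rightarrow> 'c set" where
  "consts_form FBot = {}"
| "consts_form (Atom p ts) = (\<Union>t\<in>set ts. consts_trm t)"
| "consts_form (Eq s t) = consts_trm s \<union> consts_trm t"
| "consts_form (And A B) = consts_form A \<union> consts_form B"
| "consts_form (Or A B) = consts_form A \<union> consts_form B"
| "consts_form (Imp A B) = consts_form A \<union> consts_form B"
| "consts_form (All x A) = consts_form A"
| "consts_form (Ex x A) = consts_form A"

fun preds :: "('c, 'p) form \<Rightarrow> ('p \<times> nat) set" where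
  "preds FBot = {}"
| "preds (Atom p ts) = {(p, length ts)}"
| "preds (Eq s t) = {}"
| "preds (And A B) = preds A \<union> preds B"
| "preds (Or A B) = preds A \<union> preds B"
| "preds (Imp A B) = preds A \<union> preds B"
| "preds (All x A) = preds A"
| "preds (Ex x A) = preds A"

definition sentence :: "('c, 'p) form \<Rightarrow> bool" where
  "sentence F \<longleftrightarrow> fv F = {}"

fun qfree :: "('c, 'p) form \<Rightarrow> bool" where
  "qfree (All x A) = False"
| "qfree (Ex x A) = False"
| "qfree (And A B) = (qfree A \<and> qfree B)"
| "qfree (Or A B) = (qfree A \<and> qfree B)"
| "qfree (Imp A B) = (qfree A \<and> qfree B)"
| "qfree _ = True"

fun subst_trm :: "'c trm \<Rightarrow> nat \<Rightarrow> 'c trm \<Rightarrow> 'c trm" where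
  "subst_trm (Var y) x t = (if y = x then t else Var y)"
| "subst_trm (Cst c) x t = Cst c"

fun subst :: "('c, 'p) form \<Rightarrow> nat \<Rightarrow> 'c trm \<Rightarrow> ('c, 'p) form" where
  "subst FBot x t = FBot"
| "subst (Atom p ts) x t = Atom p (map (\<lambda>s. subst_trm s x t) ts)"
| "subst (Eq s1 s2) x t = Eq (subst_trm s1 x t) (subst_trm s2 x t)"
| "subst (And A B) x t = And (subst A x t) (subst B x t)"
| "subst (Or A B) x t = Or (subst A x t) (subst B x t)"
| "subst (Imp A B) x t = Imp (subst A x t) (subst B x t)"
| "subst (All y A) x t = (if y = x then All y A else All y (subst A x t))"
| "subst (Ex y A) x t = (if y = x then Ex y A else Ex y (subst A x t))"

fun freefor :: "'c trm \<Rightarrow> nat \<Rightarrow> ('c, 'p) form \<Rightarrow> bool" where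
  "freefor t x (And A B) = (freefor t x A \<and> freefor t x B)"
| "freefor t x (Or A B) = (freefor t x A \<and> freefor t x B)"
| "freefor t x (Imp A B) = (freefor t x A \<and> freefor t x B)"
| "freefor t x (All y A) = (y = x \<or> x \<notin> fv A \<or> (y \<notin> vars_trm t \<and> freefor t x A))"
| "freefor t x (Ex y A) = (y = x \<or> x \<notin> fv A \<or> (y \<notin> vars_trm t \<and> freefor t x A))"
| "freefor t x _ = True"

fun qdepth :: "('c, 'p) form \<Rightarrow> nat" where
  "qdepth (All x A) = Suc (qdepth A)"
| "qdepth (Ex x A) = Suc (qdepth A)"
| "qdepth _ = 0"

lemma qdepth_subst[simp]: "qdepth (subst A x t) = qdepth A"
  by (induction A) auto

section \<open>Derivability in INT= + DE (natural deduction, sequents with a set of premises)\<close>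

inductive deriv_DE :: "('c, 'p) form set \<Rightarrow> ('c, 'p) form \<Rightarrow> bool" (infix "\<turnstile>\<^sub>D\<^sub>E" 55) where
  Assm: "A \<in> \<Gamma> \<Longrightarrow> \<Gamma> \<turnstile>\<^sub>D\<^sub>E A"
| BotE: "\<Gamma> \<turnstile>\<^sub>D\<^sub>E FBot \<Longrightarrow> \<Gamma> \<turnstile>\<^sub>D\<^sub>E A"
| AndI: "\<Gamma> \<turnstile>\<^sub>D\<^sub>E A \<Longrightarrow> \<Gamma> \<turnstile>\<^sub>D\<^sub>E B \<Longrightarrow> \<Gamma> \<turnstile>\<^sub>D\<^sub>E And A B"
| AndE1: "\<Gamma> \<turnstile>\<^sub>D\<^sub>E And A B \<Longrightarrow> \<Gamma> \<turnstile>\<^sub>D\<^sub>E A"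
| AndE2: "\<Gamma> \<turnstile>\<^sub>D\<^sub>E And A B \<Longrightarrow> \<Gamma> \<turnstile>\<^sub>D\<^sub>E B"
| OrI1: "\<Gamma> \<turnstile>\<^sub>D\<^sub>E A \<Longrightarrow> \<Gamma> \<turnstile>\<^sub>D\<^sub>E Or A B"
| OrI2: "\<Gamma> \<turnstile>\<^sub>D\<^sub>E B \<Longrightarrow> \<Gamma> \<turnstile>\<^sub>D\<^sub>E Or A B"
| OrE: "\<Gamma> \<turnstile>\<^sub>D\<^sub>E Or A B \<Longrightarrow> insert A \<Gamma> \<turnstile>\<^sub>D\<^sub>E C \<Longrightarrow> insert B \<Gamma> \<turnstile>\<^sub>D\<^sub>E C \<Longrightarrow> \<Gamma> \<turnstile>\<^sub>D\<^sub>E C"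
| ImpI: "insert A \<Gamma> \<turnstile>\<^sub>D\<^sub>E B \<Longrightarrow> \<Gamma> \<turnstile>\<^sub>D\<^sub>E Imp A B"
| ImpE: "\<Gamma> \<turnstile>\<^sub>D\<^sub>E Imp A B \<Longrightarrow> \<Gamma> \<turnstile>\<^sub>D\<^sub>E A \<Longrightarrow> \<Gamma> \<turnstile>\<^sub>D\<^sub>E B"
| AllI: "\<Gamma> \<turnstile>\<^sub>D\<^sub>E A \<Longrightarrow> x \<notin> (\<Union>G\<in>\<Gamma>. fv G) \<Longrightarrow> \<Gamma> \<turnstile>\<^sub>D\<^sub>E All x A"
| AllE: "\<Gamma> \<turnstile>\<^sub>D\<^sub>E All x A \<Longrightarrow> freefor t x A \<Longrightarrow> \<Gamma> \<turnstile>\<^sub>D\<^sub>E subst A x t"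
| ExI: "\<Gamma> \<turnstile>\<^sub>D\<^sub>E subst A x t \<Longrightarrow> freefor t x A \<Longrightarrow> \<Gamma> \<turnstile>\<^sub>D\<^sub>E Ex x A"
| ExE: "\<Gamma> \<turnstile>\<^sub>D\<^sub>E Ex x A \<Longrightarrow> insert A \<Gamma> \<turnstile>\<^sub>D\<^sub>E B \<Longrightarrow> x \<notin> (\<Union>G\<in>\<Gamma>. fv G) \<Longrightarrow> x \<notin> fv B
        \<Longrightarrow> \<Gamma> \<turnstile>\<^sub>D\<^sub>E B"
| EqRefl: "\<Gamma> \<turnstile>\<^sub>D\<^sub>E Eq t t"
| EqSubst: "\<Gamma> \<turnstile>\<^sub>D\<^sub>E Eq s t \<Longrightarrow> \<Gamma> \<turnstile>\<^sub>D\<^sub>E subst A x s \<Longrightarrow> freefor s x A \<Longrightarrow> freefor t x A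
        \<Longrightarrow> \<Gamma> \<turnstile>\<^sub>D\<^sub>E subst A x t"
| DE: "\<Gamma> \<turnstile>\<^sub>D\<^sub>E Or (Eq s t) (Neg (Eq s t))"

section \<open>Restricted variables, weak restriction, semi-safety, safety\<close>

fun RV :: "('c, 'p) form \<Rightarrow> nat set" where
  "RV FBot = {}"
| "RV (Atom p ts) = (\<Union>t\<in>set ts. vars_trm t)"
| "RV (Eq s t) = (case (s, t) of (Var _, Var _) \<Rightarrow> {} | _ \<Rightarrow> vars_trm s \<union> vars_trm t)"
| "RV (And A B) = RV A \<union> RV B"
| "RV (Or A B) = RV A \<inter> RV B"
| "RV (Imp A B) = {}"
| "RV (All x A) = {}"
| "RV (Ex x A) = {}"

fun simpf :: "('c, 'p) form \<Rightarrow> ('c, 'p) form" where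
  "simpf (And A B) = (let A' = simpf A; B' = simpf B in
      if A' = FBot \<or> B' = FBot then FBot
      else if A' = FTop then B' else if B' = FTop then A' else And A' B')"
| "simpf (Or A B) = (let A' = simpf A; B' = simpf B in
      if A' = FBot then B' else if B' = FBot then A'
      else if A' = FTop \<or> B' = FTop then FTop else Or A' B')"
| "simpf (Imp A B) = (let A' = simpf A; B' = simpf B in
      if A' = FBot \<or> B' = FTop then FTop
      else if A' = FTop then B' else Imp A' B')"
| "simpf (All x A) = All x (simpf A)"
| "simpf (Ex x A) = Ex x (simpf A)"
| "simpf A = A"

fun kill :: "nat \<Rightarrow> ('c, 'p) form \<Rightarrow> ('c, 'p) form" where
  "kill x FBot = FBot"
| "kill x (Atom p ts) = (if x \<in> RV (Atom p ts) then FBot else Atom p ts)"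
| "kill x (Eq s t) = (if x \<in> RV (Eq s t :: ('c, 'p) form) then FBot else Eq s t)"
| "kill x (And A B) = And (kill x A) (kill x B)"
| "kill x (Or A B) = Or (kill x A) (kill x B)"
| "kill x (Imp A B) = Imp (kill x A) (kill x B)"
| "kill x (All y A) = All y (kill x A)"
| "kill x (Ex y A) = Ex y (kill x A)"

definition pos_weakly_restricted :: "nat \<Rightarrow> ('c, 'p) form \<Rightarrow> bool" where
  "pos_weakly_restricted x G \<longleftrightarrow> simpf (kill x G) = FTop"

definition neg_weakly_restricted :: "nat \<Rightarrow> ('c, 'p) form \<Rightarrow> bool" where
  "neg_weakly_restricted x G \<longleftrightarrow> simpf (kill x G) = FBot"

text \<open>Positions of subformula occurrences: paths (0 = left/only child, 1 = right child).\<close>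
fun subf_at :: "('c, 'p) form \<Rightarrow> nat list \<Rightarrow> ('c, 'p) form option" where
  "subf_at A [] = Some A"
| "subf_at (And A B) (i # p) = (if i = 0 then subf_at A p else if i = 1 then subf_at B p else None)"
| "subf_at (Or A B) (i # p) = (if i = 0 then subf_at A p else if i = 1 then subf_at B p else None)"
| "subf_at (Imp A B) (i # p) = (if i = 0 then subf_at A p else if i = 1 then subf_at B p else None)"
| "subf_at (All x A) (i # p) = (if i = 0 then subf_at A p else None)"
| "subf_at (Ex x A) (i # p) = (if i = 0 then subf_at A p else None)"
| "subf_at _ (i # p) = None"

fun ante_count :: "('c, 'p) form \<Rightarrow> nat list \<Rightarrow> nat" where
  "ante_count A [] = 0"
| "ante_count (Imp A B) (i # p) = (if i = 0 then Suc (ante_count A p) else ante_count B p)"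
| "ante_count (And A B) (i # p) = (if i = 0 then ante_count A p else ante_count B p)"
| "ante_count (Or A B) (i # p) = (if i = 0 then ante_count A p else ante_count B p)"
| "ante_count (All x A) (i # p) = ante_count A p"
| "ante_count (Ex x A) (i # p) = ante_count A p"
| "ante_count _ (i # p) = 0"

fun is_atomic :: "('c, 'p) form \<Rightarrow> bool" where
  "is_atomic (Atom p ts) = True"
| "is_atomic (Eq s t) = True"
| "is_atomic FBot = True"
| "is_atomic _ = False"

text \<open>Prenex formula with quantifier prefix qs (True = universal, False = existential).\<close>
fun prenex :: "(bool \<times> nat) list \<Rightarrow> ('c, 'p) form \<Rightarrow> ('c, 'p) form" where
  "prenex [] M = M"
| "prenex ((q, x) # qs) M = (if q then All x (prenex qs M) else Ex x (prenex qs M))"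

text \<open>Occurrences of a variable x in M are represented by (position p of the atomic
  formula containing it, x); the subformulas containing the occurrence are those at
  prefixes of p.  Positions inside M have the same polarity in M and in the sentence.\<close>
definition semi_safe_matrix :: "(bool \<times> nat) list \<Rightarrow> ('c, 'p) form \<Rightarrow> bool" where
  "semi_safe_matrix qs M \<longleftrightarrow>
     (\<forall>x \<in> snd ` set qs. \<forall>p A. subf_at M p = Some A \<and> is_atomic A \<and> x \<in> fv A
        \<and> ante_count M p = 0 \<longrightarrow>
        (\<exists>q r G H. p = q @ r \<and> subf_at M q = Some (Imp G H) \<and> x \<in> RV G))"

definition safe_matrix :: "(bool \<times> nat) list \<Rightarrow> ('c, 'p) form \<Rightarrow> bool" where
  "safe_matrix qs M \<longleftrightarrow>
     (\<forall>(Q, x) \<in> set qs. \<forall>p A. subf_at M p = Some A \<and> is_atomic A \<and> x \<in> fv A \<longrightarrow>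
        (\<exists>q r G. p = q @ r \<and> subf_at M q = Some G \<and>
          (if Q then (even (ante_count M q) \<and> pos_weakly_restricted x G)
                   \<or> (odd (ante_count M q) \<and> neg_weakly_restricted x G)
                else (odd (ante_count M q) \<and> pos_weakly_restricted x G)
                   \<or> (even (ante_count M q) \<and> neg_weakly_restricted x G))))"

definition safe :: "('c, 'p) form \<Rightarrow> bool" where
  "safe F \<longleftrightarrow> (\<exists>qs M. F = prenex qs M \<and> qfree M \<and> distinct (map snd qs) \<and> sentence F
      \<and> semi_safe_matrix qs M \<and> safe_matrix qs M)"

fun conj_list :: "('c, 'p) form list \<Rightarrow> ('c, 'p) form" where
  "conj_list [] = FTop"
| "conj_list [A] = A"
| "conj_list (A # As) = And A (conj_list As)"

fun disj_list :: "('c, 'p) form list \<Rightarrow> ('c, 'p) form" where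
  "disj_list [] = FBot"
| "disj_list [A] = A"
| "disj_list (A # As) = Or A (disj_list As)"

text \<open>The finite set of constants c is given as a (nonempty) list cs with set cs = c.\<close>
function ground :: "'c list \<Rightarrow> ('c, 'p) form \<Rightarrow> ('c, 'p) form" where
  "ground cs (All x G) = conj_list (map (\<lambda>c. ground cs (subst G x (Cst c))) cs)"
| "ground cs (Ex x G) = disj_list (map (\<lambda>c. ground cs (subst G x (Cst c))) cs)"
| "ground cs FBot = FBot"
| "ground cs (Atom p ts) = Atom p ts"
| "ground cs (Eq s t) = Eq s t"
| "ground cs (And A B) = And A B"
| "ground cs (Or A B) = Or A B"
| "ground cs (Imp A B) = Imp A B"
  by pat_completeness auto
termination by (relation "measure (\<lambda>(cs, F). qdepth F)") auto

definition in_c :: "'c list \<Rightarrow> 'c trm list \<Rightarrow> ('c, 'p) form" where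
  "in_c cs ts = conj_list (map (\<lambda>t. disj_list (map (\<lambda>c. Eq t (Cst c)) cs)) ts)"

definition spp_axiom :: "'c list \<Rightarrow> 'p \<Rightarrow> nat \<Rightarrow> ('c, 'p) form" where
  "spp_axiom cs p n = foldr All [0..<n]
      (Imp (Atom p (map Var [0..<n])) (in_c cs (map Var [0..<n])))"

text \<open>SPP_c, given as the set of its conjuncts (one per predicate constant of F).\<close>
definition SPP :: "'c list \<Rightarrow> ('c, 'p) form \<Rightarrow> ('c, 'p) form set" where
  "SPP cs F = {spp_axiom cs p n | p n. (p, n) \<in> preds F}"

end

theory Submission
  imports Defs
begin


lemma subst_trm_self[simp]: "subst_trm s x (Var x) = s"
  by (cases s) auto

lemma subst_Var_self[simp]: "subst A x (Var x) = A"
  by (induction A) (auto simp: map_idI)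

lemma freefor_Var_self[simp]: "freefor (Var x) x A"
  by (induction A) auto

lemma freefor_Cst[simp]: "freefor (Cst c) x A"
  by (induction A) auto

lemma vars_subst_trm_Cst[simp]: "vars_trm (subst_trm s x (Cst c)) = vars_trm s - {x}"
  by (cases s) auto

lemma fv_subst_Cst[simp]: "fv (subst A x (Cst c)) = fv A - {x}"
  by (induction A) auto

lemma subst_trm_nofv: "x \<notin> vars_trm s \<Longrightarrow> subst_trm s x t = s"
  by (cases s) auto

lemma subst_nofv: "x \<notin> fv A \<Longrightarrow> subst A x t = A"
  by (induction A) (auto simp: subst_trm_nofv map_idI)

lemma qfree_subst[simp]: "qfree (subst A x t) = qfree A"
  by (induction A) auto

lemma preds_subst[simp]: "preds (subst A x t) = preds A"
  by (induction A) auto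

lemma consts_subst_trm_Cst: "consts_trm (subst_trm s x (Cst c)) \<subseteq> insert c (consts_trm s)"
  by (cases s) auto

lemma consts_subst_Cst: "consts_form (subst A x (Cst c)) \<subseteq> insert c (consts_form A)"
proof (induction A)
  case (Atom p ts)
  then show ?case using consts_subst_trm_Cst[of _ x c] by (simp; blast)
next
  case (Eq s t)
  then show ?case using consts_subst_trm_Cst[of _ x c] by (simp; blast)
qed auto

lemma fv_prenex[simp]: "fv (prenex qs M) = fv M - set (map snd qs)"
  by (induction qs) (auto split: if_splits)

lemma prenex_subst: "x \<notin> set (map snd qs) \<Longrightarrow> prenex qs (subst M x t) = subst (prenex qs M) x t"
  by (induction qs) (auto split: if_splits)

lemma fv_conj_list: "fv (conj_list As) \<subseteq> (\<Union>A\<in>set As. fv A)"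
  by (induction As rule: conj_list.induct) auto

lemma fv_disj_list: "fv (disj_list As) \<subseteq> (\<Union>A\<in>set As. fv A)"
  by (induction As rule: disj_list.induct) auto


lemma fv_ground: "fv (ground cs G) \<subseteq> fv G"
proof (induction cs G rule: ground.induct)
  case (1 cs x G)
  have "fv (ground cs (form.All x G)) \<subseteq> (\<Union>c\<in>set cs. fv (ground cs (subst G x (Cst c))))"
    using fv_conj_list[of "map (\<lambda>c. ground cs (subst G x (Cst c))) cs"] by simp
  also have "\<dots> \<subseteq> fv (form.All x G)" using 1 by auto
  finally show ?case .
next
  case (2 cs x G)
  have "fv (ground cs (form.Ex x G)) \<subseteq> (\<Union>c\<in>set cs. fv (ground cs (subst G x (Cst c))))"
    using fv_disj_list[of "map (\<lambda>c. ground cs (subst G x (Cst c))) cs"] by simp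
  also have "\<dots> \<subseteq> fv (form.Ex x G)" using 2 by auto
  finally show ?case .
qed auto

lemma ground_qfree: "qfree G \<Longrightarrow> ground cs G = G"
  by (cases G) auto

lemma subf_at_subst: "qfree M \<Longrightarrow> subf_at (subst M x t) p = map_option (\<lambda>A. subst A x t) (subf_at M p)"
proof (induction M arbitrary: p)
qed (case_tac p; simp)+

lemma ante_count_subst: "ante_count (subst M x t) p = ante_count M p"
proof (induction M arbitrary: p)
qed (case_tac p; simp)+



section \<open>Derivability relative to a family of contexts\<close>

definition fvs :: "('c, 'p) form set \<Rightarrow> nat set" where
  "fvs \<Gamma> = (\<Union>G\<in>\<Gamma>. fv G)"

definition Dv :: "('c, 'p) form set \<Rightarrow> nat set \<Rightarrow> nat set \<Rightarrow> ('c, 'p) form \<Rightarrow> bool" where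
  "Dv S V X A \<longleftrightarrow> (\<forall>\<Gamma>. S \<subseteq> \<Gamma> \<longrightarrow> fvs \<Gamma> \<subseteq> V \<longrightarrow> fvs \<Gamma> \<inter> X = {} \<longrightarrow> \<Gamma> \<turnstile>\<^sub>D\<^sub>E A)"

lemma fvs_insert[simp]: "fvs (insert A \<Gamma>) = fv A \<union> fvs \<Gamma>"
  by (auto simp: fvs_def)

lemma Dv_use: "Dv S V X A \<Longrightarrow> S \<subseteq> \<Gamma> \<Longrightarrow> fvs \<Gamma> \<subseteq> V \<Longrightarrow> fvs \<Gamma> \<inter> X = {} \<Longrightarrow> \<Gamma> \<turnstile>\<^sub>D\<^sub>E A"
  by (auto simp: Dv_def)

lemma Dv_mono: assumes "Dv S V X A" "S \<subseteq> S'" "X \<subseteq> X'" shows "Dv S' V X' A"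
  unfolding Dv_def
proof (intro allI impI)
  fix \<Gamma> assume h: "S' \<subseteq> \<Gamma>" "fvs \<Gamma> \<subseteq> V" "fvs \<Gamma> \<inter> X' = {}"
  have "S \<subseteq> \<Gamma>" using assms(2) h(1) by (rule subset_trans)
  moreover have "fvs \<Gamma> \<inter> X = {}" using assms(3) h(3) by blast
  ultimately show "\<Gamma> \<turnstile>\<^sub>D\<^sub>E A" using assms(1) h(2) unfolding Dv_def by blast
qed

lemma dAssm: "A \<in> S \<Longrightarrow> Dv S V X A"
  unfolding Dv_def by (blast intro: deriv_DE.Assm)

lemma dBotE: "Dv S V X FBot \<Longrightarrow> Dv S V X A"
  unfolding Dv_def by (blast intro: deriv_DE.BotE)

lemma dAndI: "Dv S V X A \<Longrightarrow> Dv S V X B \<Longrightarrow> Dv S V X (And A B)"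
  unfolding Dv_def by (blast intro: deriv_DE.AndI)

lemma dAndE1: "Dv S V X (And A B) \<Longrightarrow> Dv S V X A"
  unfolding Dv_def by (blast intro: deriv_DE.AndE1)

lemma dAndE2: "Dv S V X (And A B) \<Longrightarrow> Dv S V X B"
  unfolding Dv_def by (blast intro: deriv_DE.AndE2)

lemma dOrI1: "Dv S V X A \<Longrightarrow> Dv S V X (Or A B)"
  unfolding Dv_def by (blast intro: deriv_DE.OrI1)

lemma dOrI2: "Dv S V X B \<Longrightarrow> Dv S V X (Or A B)"
  unfolding Dv_def by (blast intro: deriv_DE.OrI2)

lemma dOrE: "Dv S V X (Or A B) \<Longrightarrow> Dv (insert A S) V X C \<Longrightarrow> Dv (insert B S) V X C
  \<Longrightarrow> fv A \<subseteq> V \<Longrightarrow> fv B \<subseteq> V \<Longrightarrow> fv A \<inter> X = {} \<Longrightarrow> fv B \<inter> X = {} \<Longrightarrow> Dv S V X C"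
  unfolding Dv_def
proof (intro allI impI)
  fix \<Gamma> assume a: "\<forall>\<Gamma>. S \<subseteq> \<Gamma> \<longrightarrow> fvs \<Gamma> \<subseteq> V \<longrightarrow> fvs \<Gamma> \<inter> X = {} \<longrightarrow> \<Gamma> \<turnstile>\<^sub>D\<^sub>E form.Or A B"
    "\<forall>\<Gamma>. insert A S \<subseteq> \<Gamma> \<longrightarrow> fvs \<Gamma> \<subseteq> V \<longrightarrow> fvs \<Gamma> \<inter> X = {} \<longrightarrow> \<Gamma> \<turnstile>\<^sub>D\<^sub>E C"
    "\<forall>\<Gamma>. insert B S \<subseteq> \<Gamma> \<longrightarrow> fvs \<Gamma> \<subseteq> V \<longrightarrow> fvs \<Gamma> \<inter> X = {} \<longrightarrow> \<Gamma> \<turnstile>\<^sub>D\<^sub>E C"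
    "fv A \<subseteq> V" "fv B \<subseteq> V" "fv A \<inter> X = {}" "fv B \<inter> X = {}"
    "S \<subseteq> \<Gamma>" "fvs \<Gamma> \<subseteq> V" "fvs \<Gamma> \<inter> X = {}"
  have 1: "\<Gamma> \<turnstile>\<^sub>D\<^sub>E form.Or A B" using a(1)[rule_format, OF a(8,9,10)] .
  have h1: "insert A S \<subseteq> insert A \<Gamma>" "fvs (insert A \<Gamma>) \<subseteq> V" "fvs (insert A \<Gamma>) \<inter> X = {}"
    using a(4,6,8,9,10) by auto
  have 2: "insert A \<Gamma> \<turnstile>\<^sub>D\<^sub>E C" using a(2)[rule_format, OF h1] .
  have h2: "insert B S \<subseteq> insert B \<Gamma>" "fvs (insert B \<Gamma>) \<subseteq> V" "fvs (insert B \<Gamma>) \<inter> X = {}"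
    using a(5,7,8,9,10) by auto
  have 3: "insert B \<Gamma> \<turnstile>\<^sub>D\<^sub>E C" using a(3)[rule_format, OF h2] .
  show "\<Gamma> \<turnstile>\<^sub>D\<^sub>E C" using 1 2 3 by (rule deriv_DE.OrE)
qed

lemma dImpI: "Dv (insert A S) V X B \<Longrightarrow> fv A \<subseteq> V \<Longrightarrow> fv A \<inter> X = {} \<Longrightarrow> Dv S V X (Imp A B)"
  unfolding Dv_def
proof (intro allI impI)
  fix \<Gamma> assume a: "\<forall>\<Gamma>. insert A S \<subseteq> \<Gamma> \<longrightarrow> fvs \<Gamma> \<subseteq> V \<longrightarrow> fvs \<Gamma> \<inter> X = {} \<longrightarrow> \<Gamma> \<turnstile>\<^sub>D\<^sub>E B"
    "fv A \<subseteq> V" "fv A \<inter> X = {}" "S \<subseteq> \<Gamma>" "fvs \<Gamma> \<subseteq> V" "fvs \<Gamma> \<inter> X = {}"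
  have h1: "insert A S \<subseteq> insert A \<Gamma>" "fvs (insert A \<Gamma>) \<subseteq> V" "fvs (insert A \<Gamma>) \<inter> X = {}"
    using a(2-6) by auto
  have "insert A \<Gamma> \<turnstile>\<^sub>D\<^sub>E B" using a(1)[rule_format, OF h1] .
  then show "\<Gamma> \<turnstile>\<^sub>D\<^sub>E Imp A B" by (rule deriv_DE.ImpI)
qed

lemma dImpE: "Dv S V X (Imp A B) \<Longrightarrow> Dv S V X A \<Longrightarrow> Dv S V X B"
  unfolding Dv_def by (blast intro: deriv_DE.ImpE)

lemma dAllI: "Dv S V X A \<Longrightarrow> x \<in> X \<Longrightarrow> Dv S V X (All x A)"
  unfolding Dv_def fvs_def by (blast intro: deriv_DE.AllI)

lemma dAllE: "Dv S V X (All x A) \<Longrightarrow> freefor t x A \<Longrightarrow> Dv S V X (subst A x t)"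
  unfolding Dv_def by (blast intro: deriv_DE.AllE)

lemma dExI: "Dv S V X (subst A x t) \<Longrightarrow> freefor t x A \<Longrightarrow> Dv S V X (Ex x A)"
  unfolding Dv_def by (blast intro: deriv_DE.ExI)

lemma dExE: "Dv S V X (Ex x A) \<Longrightarrow> Dv (insert A S) V (X - {x}) B \<Longrightarrow> x \<in> X \<Longrightarrow> x \<notin> fv B
  \<Longrightarrow> fv A \<subseteq> V \<Longrightarrow> fv A \<inter> X \<subseteq> {x} \<Longrightarrow> Dv S V X B"
  unfolding Dv_def
proof (intro allI impI)
  fix \<Gamma> assume a: "\<forall>\<Gamma>. S \<subseteq> \<Gamma> \<longrightarrow> fvs \<Gamma> \<subseteq> V \<longrightarrow> fvs \<Gamma> \<inter> X = {} \<longrightarrow> \<Gamma> \<turnstile>\<^sub>D\<^sub>E Ex x A"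
    "\<forall>\<Gamma>. insert A S \<subseteq> \<Gamma> \<longrightarrow> fvs \<Gamma> \<subseteq> V \<longrightarrow> fvs \<Gamma> \<inter> (X - {x}) = {} \<longrightarrow> \<Gamma> \<turnstile>\<^sub>D\<^sub>E B"
    "x \<in> X" "x \<notin> fv B" "fv A \<subseteq> V" "fv A \<inter> X \<subseteq> {x}" "S \<subseteq> \<Gamma>" "fvs \<Gamma> \<subseteq> V" "fvs \<Gamma> \<inter> X = {}"
  have x: "x \<notin> (\<Union>G\<in>\<Gamma>. fv G)" using a(3,9) by (auto simp: fvs_def)
  have 1: "\<Gamma> \<turnstile>\<^sub>D\<^sub>E Ex x A" using a(1)[rule_format, OF a(7,8,9)] .
  have h1: "insert A S \<subseteq> insert A \<Gamma>" "fvs (insert A \<Gamma>) \<subseteq> V" "fvs (insert A \<Gamma>) \<inter> (X - {x}) = {}"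
    using a(5-9) by auto
  have 2: "insert A \<Gamma> \<turnstile>\<^sub>D\<^sub>E B" using a(2)[rule_format, OF h1] .
  show "\<Gamma> \<turnstile>\<^sub>D\<^sub>E B" using 1 2 x a(4) by (rule deriv_DE.ExE)
qed

lemma dEqRefl: "Dv S V X (Eq t t)"
  unfolding Dv_def by (blast intro: deriv_DE.EqRefl)

lemma dEqSubst: "Dv S V X (Eq s t) \<Longrightarrow> Dv S V X (subst A x s) \<Longrightarrow> freefor s x A \<Longrightarrow> freefor t x A
  \<Longrightarrow> Dv S V X (subst A x t)"
  unfolding Dv_def by (blast intro: deriv_DE.EqSubst)

lemma dDE: "Dv S V X (Or (Eq s t) (Neg (Eq s t)))"
  unfolding Dv_def by (blast intro: deriv_DE.DE)

lemma dcut: "Dv S V X A \<Longrightarrow> Dv (insert A S) V X B \<Longrightarrow> fv A \<subseteq> V \<Longrightarrow> fv A \<inter> X = {} \<Longrightarrow> Dv S V X B"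
  by (rule dImpE[OF dImpI])

lemma dIff_refl: "fv A \<subseteq> V \<Longrightarrow> fv A \<inter> X = {} \<Longrightarrow> Dv S V X (Iff A A)"
  by (intro dAndI dImpI dAssm) auto

lemma dTop: "Dv S V X FTop"
  by (intro dImpI dAssm) auto

lemma dIffE1: "Dv S V X (Iff A B) \<Longrightarrow> Dv S V X A \<Longrightarrow> Dv S V X B"
  by (rule dImpE[OF dAndE1])

lemma dIffE2: "Dv S V X (Iff A B) \<Longrightarrow> Dv S V X B \<Longrightarrow> Dv S V X A"
  by (rule dImpE[OF dAndE2])

lemma dEq_sym: "Dv S V X (Eq (Var x) (Cst c)) \<Longrightarrow> Dv S V X (Eq (Cst c) (Var x))"
proof -
  assume a: "Dv S V X (Eq (Var x) (Cst c))"
  have "Dv S V X (subst (Eq (Var (Suc x)) (Var x)) (Suc x) (Cst c))"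
    apply (rule dEqSubst[OF a])
    using dEqRefl[of S V X "Var x"] by auto
  then show ?thesis by simp
qed

lemma dconj_I: "(\<And>A. A \<in> set As \<Longrightarrow> Dv S V X A) \<Longrightarrow> Dv S V X (conj_list As)"
proof (induction As rule: conj_list.induct)
  case (3 A B rest)
  then show ?case by (simp add: dAndI)
qed (auto simp: dTop)

lemma dconj_E: "Dv S V X (conj_list As) \<Longrightarrow> A \<in> set As \<Longrightarrow> Dv S V X A"
proof (induction As rule: conj_list.induct)
  case (3 A B rest)
  have h: "Dv S V X (And A (conj_list (B # rest)))" using 3(2) by simp
  then show ?case using dAndE1[OF h] dAndE2[OF h] 3 by auto
qed auto

lemma ddisj_I: "A \<in> set As \<Longrightarrow> Dv S V X A \<Longrightarrow> Dv S V X (disj_list As)"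
proof (induction As rule: disj_list.induct)
  case (3 A B rest)
  then show ?case by (auto simp: dOrI1 dOrI2)
qed auto

lemma ddisj_E: "Dv S V X (disj_list As) \<Longrightarrow>
   (\<And>A. A \<in> set As \<Longrightarrow> Dv (insert A S) V X C \<and> fv A \<subseteq> V \<and> fv A \<inter> X = {}) \<Longrightarrow> Dv S V X C"
proof (induction As arbitrary: S rule: disj_list.induct)
  case 1
  then show ?case by (auto intro: dBotE)
next
  case (2 A)
  then have "Dv S V X A" "Dv (insert A S) V X C" "fv A \<subseteq> V" "fv A \<inter> X = {}" by auto
  then show ?case by (rule dcut)
next
  case (3 A B rest)
  let ?D = "disj_list (B # rest)"
  have fvD: "fv ?D \<subseteq> V" "fv ?D \<inter> X = {}"
    using fv_disj_list[of "B # rest"] 3(3) by fastforce+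
  have "Dv (insert ?D S) V X C"
  proof (rule 3(1))
    show "Dv (insert ?D S) V X ?D" by (rule dAssm) simp
  next
    fix A assume "A \<in> set (B # rest)"
    then have "Dv (insert A S) V X C \<and> fv A \<subseteq> V \<and> fv A \<inter> X = {}" using 3(3) by simp
    then show "Dv (insert A (insert ?D S)) V X C \<and> fv A \<subseteq> V \<and> fv A \<inter> X = {}"
      using Dv_mono[of "insert A S" V X C "insert A (insert ?D S)" X] by auto
  qed
  moreover have "Dv S V X (Or A ?D)" using 3(2) by simp
  moreover have "Dv (insert A S) V X C" "fv A \<subseteq> V" "fv A \<inter> X = {}" using 3(3)[of A] by auto
  ultimately show ?case
    using fvD dOrE[of S V X A ?D C] by blast
qed

lemma ddisj_em: "(\<And>A S. A \<in> set As \<Longrightarrow> Dv S V X (Or A (Neg A)) \<and> fv A \<subseteq> V \<and> fv A \<inter> X = {})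
   \<Longrightarrow> Dv S V X (Or (disj_list As) (Neg (disj_list As)))"
proof (induction As arbitrary: S rule: disj_list.induct)
  case 1
  show ?case by (simp, rule dOrI2, rule dImpI, rule dAssm) auto
next
  case (2 A)
  then show ?case by auto
next
  case (3 A B rest)
  let ?D = "disj_list (B # rest)"
  have fvD: "fv ?D \<subseteq> V" "fv ?D \<inter> X = {}"
    using fv_disj_list[of "B # rest"] 3(2)[of _ S] by fastforce+
  have hA: "Dv S V X (Or A (Neg A))" "fv A \<subseteq> V" "fv A \<inter> X = {}" using 3(2)[of A S] by auto
  have c1: "Dv (insert A S) V X (Or (Or A ?D) (Neg (Or A ?D)))"
    by (intro dOrI1 dAssm) simp
  have "Dv (insert (Neg A) S) V X (Or ?D (Neg ?D))"
    using 3(1)[of "insert (Neg A) S"] 3(2) by auto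
  moreover have "Dv (insert ?D (insert (Neg A) S)) V X (Or (Or A ?D) (Neg (Or A ?D)))"
    by (intro dOrI1 dOrI2 dAssm) simp
  moreover have "Dv (insert (Neg ?D) (insert (Neg A) S)) V X (Or (Or A ?D) (Neg (Or A ?D)))"
    apply (rule dOrI2, rule dImpI)
    apply (rule dOrE[OF dAssm, of A ?D])
          apply simp
         apply (rule dImpE[OF dAssm, of A], simp, rule dAssm, simp)
        apply (rule dImpE[OF dAssm, of ?D], simp, rule dAssm, simp)
    using hA fvD by auto
  ultimately have c2: "Dv (insert (Neg A) S) V X (Or (Or A ?D) (Neg (Or A ?D)))"
    using fvD dOrE[of "insert (Neg A) S" V X ?D "Neg ?D"] by simp
  show ?case
    using dOrE[OF hA(1) c1 c2] hA fvD by auto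
qed




section \<open>Simultaneous substitution and instances of SPP axioms\<close>

fun ssubst_trm :: "(nat \<Rightarrow> 'c trm) \<Rightarrow> 'c trm \<Rightarrow> 'c trm" where
  "ssubst_trm \<sigma> (Var x) = \<sigma> x"
| "ssubst_trm \<sigma> (Cst c) = Cst c"

fun ssubst :: "(nat \<Rightarrow> 'c trm) \<Rightarrow> ('c, 'p) form \<Rightarrow> ('c, 'p) form" where
  "ssubst \<sigma> FBot = FBot"
| "ssubst \<sigma> (Atom p ts) = Atom p (map (ssubst_trm \<sigma>) ts)"
| "ssubst \<sigma> (Eq s t) = Eq (ssubst_trm \<sigma> s) (ssubst_trm \<sigma> t)"
| "ssubst \<sigma> (And A B) = And (ssubst \<sigma> A) (ssubst \<sigma> B)"
| "ssubst \<sigma> (Or A B) = Or (ssubst \<sigma> A) (ssubst \<sigma> B)"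
| "ssubst \<sigma> (Imp A B) = Imp (ssubst \<sigma> A) (ssubst \<sigma> B)"
| "ssubst \<sigma> (All x A) = All x A"
| "ssubst \<sigma> (Ex x A) = Ex x A"

lemma subst_trm_ssubst: "subst_trm s x t = ssubst_trm (Var(x := t)) s"
  by (cases s) auto

lemma subst_ssubst: "qfree B \<Longrightarrow> subst B x t = ssubst (Var(x := t)) B"
  by (induction B) (auto simp: subst_trm_ssubst)

lemma ssubst_trm_comp: "ssubst_trm \<sigma> (ssubst_trm \<tau> s) = ssubst_trm (\<lambda>v. ssubst_trm \<sigma> (\<tau> v)) s"
  by (cases s) auto

lemma ssubst_comp: "qfree B \<Longrightarrow> ssubst \<sigma> (ssubst \<tau> B) = ssubst (\<lambda>v. ssubst_trm \<sigma> (\<tau> v)) B"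
  by (induction B) (auto simp: ssubst_trm_comp)

lemma qfree_ssubst[simp]: "qfree B \<Longrightarrow> qfree (ssubst \<sigma> B)"
  by (induction B) auto

lemma ssubst_trm_Var[simp]: "ssubst_trm Var s = s"
  by (cases s) auto

lemma ssubst_trm_id: "(\<And>v. v \<in> vars_trm u \<Longrightarrow> \<sigma> v = Var v) \<Longrightarrow> ssubst_trm \<sigma> u = u"
  by (cases u) auto

lemma ssubst_conj_list: "ssubst \<sigma> (conj_list As) = conj_list (map (ssubst \<sigma>) As)"
  by (induction As rule: conj_list.induct) auto

lemma ssubst_disj_list: "ssubst \<sigma> (disj_list As) = disj_list (map (ssubst \<sigma>) As)"
  by (induction As rule: disj_list.induct) auto

lemma ssubst_in_c: "ssubst \<sigma> (in_c cs ts) = in_c cs (map (ssubst_trm \<sigma>) ts)"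
  by (simp add: in_c_def ssubst_conj_list ssubst_disj_list comp_def)

lemma qfree_conj_list: "(\<And>A. A \<in> set As \<Longrightarrow> qfree A) \<Longrightarrow> qfree (conj_list As)"
  by (induction As rule: conj_list.induct) auto

lemma qfree_disj_list: "(\<And>A. A \<in> set As \<Longrightarrow> qfree A) \<Longrightarrow> qfree (disj_list As)"
  by (induction As rule: disj_list.induct) auto

lemma qfree_in_c: "qfree (in_c cs ts)"
  unfolding in_c_def by (auto intro!: qfree_conj_list qfree_disj_list)

lemma freefor_qfree: "qfree B \<Longrightarrow> freefor t x B"
  by (induction B) auto

lemma subst_foldr_All: "x \<notin> set xs \<Longrightarrow> subst (foldr All xs B) x t = foldr All xs (subst B x t)"
  by (induction xs) auto

lemma freefor_foldr_All: "qfree B \<Longrightarrow> vars_trm t \<inter> set xs = {} \<Longrightarrow> freefor t x (foldr All xs B)"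
  by (induction xs) (auto simp: freefor_qfree)

definition msub :: "nat list \<Rightarrow> 'c trm list \<Rightarrow> nat \<Rightarrow> 'c trm" where
  "msub xs us v = (case map_of (zip xs us) v of Some u \<Rightarrow> u | None \<Rightarrow> Var v)"

lemma dinst:
  assumes "length xs = length us"
  shows "Dv S V X (foldr All xs B) \<Longrightarrow> qfree B \<Longrightarrow> distinct xs
    \<Longrightarrow> (\<And>u. u \<in> set us \<Longrightarrow> vars_trm u \<inter> set xs = {}) \<Longrightarrow> Dv S V X (ssubst (msub xs us) B)"
  using assms
proof (induction xs us arbitrary: B rule: list_induct2)
  case Nil
  have "ssubst (msub [] []) B = ssubst Var B"
    by (rule arg_cong[where f="\<lambda>\<sigma>. ssubst \<sigma> B"]) (auto simp: msub_def)
  moreover have "ssubst Var B = B" using Nil(2) by (induction B) (auto simp: ssubst_trm_Var map_idI)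
  ultimately show ?case using Nil by simp
next
  case (Cons x xs u us)
  have xn: "x \<notin> set xs" using Cons.prems(3) by simp
  have vu: "vars_trm u \<inter> set xs = {}" "x \<notin> vars_trm u" using Cons.prems(4)[of u] by auto
  have "Dv S V X (subst (foldr All xs B) x u)"
    using dAllE[of S V X x "foldr All xs B" u] Cons.prems(1) freefor_foldr_All[OF Cons.prems(2) vu(1)] by simp
  then have "Dv S V X (foldr All xs (subst B x u))" by (metis subst_foldr_All[OF xn])
  then have "Dv S V X (ssubst (msub xs us) (subst B x u))"
    using Cons.IH Cons.prems by auto
  also have "ssubst (msub xs us) (subst B x u) = ssubst (msub (x # xs) (u # us)) B"
  proof -
    have "ssubst (msub xs us) (subst B x u) = ssubst (\<lambda>v. ssubst_trm (msub xs us) ((Var(x := u)) v)) B"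
      using Cons.prems(2) by (simp add: subst_ssubst ssubst_comp)
    also have "(\<lambda>v. ssubst_trm (msub xs us) ((Var(x := u)) v)) = msub (x # xs) (u # us)"
    proof
      fix v
      show "ssubst_trm (msub xs us) ((Var(x := u)) v) = msub (x # xs) (u # us) v"
      proof (cases "v = x")
        case True
        have "ssubst_trm (msub xs us) u = u"
          apply (rule ssubst_trm_id)
          subgoal for v
          proof -
            assume v: "v \<in> vars_trm u"
            then have "v \<notin> set xs" using vu(1) by auto
            then have "map_of (zip xs us) v = None" using Cons.hyps by simp
            then show ?thesis by (simp add: msub_def)
          qed
          done
        then show ?thesis using True by (simp add: msub_def)
      next
        case False
        then show ?thesis by (simp add: msub_def)
      qed
    qed
    finally show ?thesis .
  qed
  finally show ?case .
qed

lemma dgen: "Dv S V X A \<Longrightarrow> set zs \<subseteq> X \<Longrightarrow> Dv S V X (foldr All zs A)"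
  by (induction zs) (auto intro: dAllI)

lemma Dv_drop_X: assumes "Dv S V (X \<union> Z) A" "V \<inter> Z = {}" shows "Dv S V X A"
  unfolding Dv_def
proof (intro allI impI)
  fix \<Gamma> assume h: "S \<subseteq> \<Gamma>" "fvs \<Gamma> \<subseteq> V" "fvs \<Gamma> \<inter> X = {}"
  have "fvs \<Gamma> \<inter> (X \<union> Z) = {}" using h(2,3) assms(2) by auto
  then show "\<Gamma> \<turnstile>\<^sub>D\<^sub>E A" using Dv_use[OF assms(1) h(1,2)] by blast
qed

lemma dspp:
  fixes cs :: "'c list" and p :: 'p and S :: "('c, 'p) form set"
  assumes "spp_axiom cs p (length ts) \<in> S" "(\<Union>t\<in>set ts. vars_trm t) \<subseteq> V" "finite V"
  shows "Dv S V X (Imp (Atom p ts) (in_c cs ts))"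
proof -
  define n where "n = length ts"
  define N where "N = Suc (Max (insert n V))"
  define zs where "zs = [N..<N+n]"
  have Nn: "n < N" and NV: "\<And>v. v \<in> V \<Longrightarrow> v < N"
    using assms(3) by (auto simp: N_def le_imp_less_Suc)
  have zsV: "V \<inter> set zs = {}" using NV by (force simp: zs_def)
  have dz: "distinct zs" "length zs = n" by (auto simp: zs_def)
  define B where "B = Imp (Atom p (map Var [0..<n])) (in_c cs (map Var [0..<n]))"
  have qB: "qfree B" by (simp add: B_def qfree_in_c)
  let ?X = "X \<union> set zs"
  have 1: "Dv S V ?X (foldr All [0..<n] B)"
    using assms(1) by (intro dAssm) (simp add: spp_axiom_def B_def n_def)
  define \<sigma>1 where "\<sigma>1 = (msub [0..<n] (map Var zs) :: nat \<Rightarrow> 'c trm)"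
  have 2: "Dv S V ?X (ssubst \<sigma>1 B)"
    unfolding \<sigma>1_def
    apply (rule dinst[OF _ 1 qB])
    using dz Nn by (auto simp: zs_def)
  have 3: "Dv S V ?X (foldr All zs (ssubst \<sigma>1 B))"
    by (rule dgen[OF 2]) simp
  define \<sigma>2 where "\<sigma>2 = msub zs ts"
  have 4: "Dv S V ?X (ssubst \<sigma>2 (ssubst \<sigma>1 B))"
    unfolding \<sigma>2_def
    apply (rule dinst[OF _ 3 qfree_ssubst[OF qB] dz(1)])
    using dz n_def apply simp
    using assms(2) zsV by blast
  have "\<And>i. i < n \<Longrightarrow> ssubst_trm \<sigma>2 (\<sigma>1 i) = ts ! i"
  proof -
    fix i assume i: "i < n"
    have "map_of (zip [0..<n] (map Var zs :: 'c trm list)) ([0..<n] ! i) = Some (map Var zs ! i)"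
      by (rule map_of_zip_nth) (use i dz in auto)
    then have "map_of (zip [0..<n] (map Var zs :: 'c trm list)) i = Some (Var (zs ! i))"
      using i dz by (simp del: map_of_eq_Some_iff)
    then have "\<sigma>1 i = Var (zs ! i)" unfolding \<sigma>1_def msub_def by (simp only: option.case)
    moreover have "map_of (zip zs ts) (zs ! i) = Some (ts ! i)"
      by (rule map_of_zip_nth) (use i dz n_def in auto)
    then have "\<sigma>2 (zs ! i) = ts ! i" unfolding \<sigma>2_def msub_def by (simp only: option.case)
    ultimately show "ssubst_trm \<sigma>2 (\<sigma>1 i) = ts ! i" by simp
  qed
  then have meq: "map (\<lambda>v. ssubst_trm \<sigma>2 (\<sigma>1 v)) [0..<n] = ts"
    by (intro nth_equalityI) (auto simp: n_def)
  have "ssubst \<sigma>2 (ssubst \<sigma>1 B) = ssubst (\<lambda>v. ssubst_trm \<sigma>2 (\<sigma>1 v)) B"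
    by (rule ssubst_comp[OF qB])
  also have "\<dots> = Imp (Atom p (map (\<lambda>v. ssubst_trm \<sigma>2 (\<sigma>1 v)) [0..<n]))
      (in_c cs (map (\<lambda>v. ssubst_trm \<sigma>2 (\<sigma>1 v)) [0..<n]))"
    unfolding B_def by (simp only: ssubst.simps ssubst_in_c map_map comp_def ssubst_trm.simps)
  also have "\<dots> = Imp (Atom p ts) (in_c cs ts)" by (simp only: meq)
  finally have "ssubst \<sigma>2 (ssubst \<sigma>1 B) = Imp (Atom p ts) (in_c cs ts)" .
  with 4 have "Dv S V ?X (Imp (Atom p ts) (in_c cs ts))" by simp
  then show ?thesis by (rule Dv_drop_X[OF _ zsV])
qed




section \<open>Weak restriction: simplification behaviour and derivations\<close>

lemma simpf_And_Top: "simpf (And A B) = FTop \<longleftrightarrow> simpf A = FTop \<and> simpf B = FTop"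
  by (auto simp: Let_def)
lemma simpf_And_Bot: "simpf (And A B) = FBot \<longleftrightarrow> simpf A = FBot \<or> simpf B = FBot"
  by (auto simp: Let_def)
lemma simpf_Or_Top: "simpf (Or A B) = FTop \<longleftrightarrow> simpf A = FTop \<or> simpf B = FTop"
  by (auto simp: Let_def)
lemma simpf_Or_Bot: "simpf (Or A B) = FBot \<longleftrightarrow> simpf A = FBot \<and> simpf B = FBot"
  by (auto simp: Let_def)
lemma simpf_Imp_Top: "simpf (Imp A B) = FTop \<longleftrightarrow> simpf A = FBot \<or> simpf B = FTop"
  by (auto simp: Let_def)
lemma simpf_Imp_Bot: "simpf (Imp A B) = FBot \<longleftrightarrow> simpf A = FTop \<and> simpf B = FBot"
  by (auto simp: Let_def)

lemmas simpf_conn = simpf_And_Top simpf_And_Bot simpf_Or_Top simpf_Or_Bot simpf_Imp_Top simpf_Imp_Bot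

lemma kill_subst_mono:
  "qfree H \<Longrightarrow> y \<noteq> x \<Longrightarrow>
    (simpf (kill y H) = FTop \<longrightarrow> simpf (kill y (subst H x (Cst c))) = FTop) \<and>
    (simpf (kill y H) = FBot \<longrightarrow> simpf (kill y (subst H x (Cst c))) = FBot)"
proof (induction H)
  case (Atom p ts)
  then show ?case by auto
next
  case (Eq s t)
  then show ?case by (cases s; cases t) auto
qed (auto simp only: kill.simps subst.simps simpf_conn qfree.simps)

definition Dx :: "'c list \<Rightarrow> nat \<Rightarrow> ('c, 'p) form" where
  "Dx cs x = disj_list (map (\<lambda>c. Eq (Var x) (Cst c)) cs)"

lemma fv_Dx: "fv (Dx cs x) \<subseteq> {x}"
proof -
  have "(\<Union>A\<in>set (map (\<lambda>c. Eq (Var x) (Cst c)) cs). fv A) \<subseteq> {x}" by auto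
  then show ?thesis unfolding Dx_def using fv_disj_list by (rule subset_trans[rotated])
qed

lemma dEq_sym2: "Dv S V X (Eq (Cst c) (Var x)) \<Longrightarrow> Dv S V X (Eq (Var x) (Cst c))"
proof -
  assume a: "Dv S V X (Eq (Cst c) (Var x))"
  have "Dv S V X (subst (Eq (Var (Suc x)) (Cst c)) (Suc x) (Var x))"
    apply (rule dEqSubst[OF a])
    using dEqRefl[of S V X "Cst c"] by auto
  then show ?thesis by simp
qed

lemma dDx_I: "c \<in> set cs \<Longrightarrow> Dv S V X (Eq (Var x) (Cst c)) \<Longrightarrow> Dv S V X (Dx cs x)"
  unfolding Dx_def by (rule ddisj_I) auto

lemma dkill_atom:
  fixes A :: "('c, 'p) form"
  assumes "x \<in> RV A" "is_atomic A" "consts_form A \<subseteq> set cs" "preds A \<subseteq> preds F" "fv A \<subseteq> V" "finite V"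
    "SPP cs F \<subseteq> S" "Neg (Dx cs x) \<in> S"
  shows "Dv S V {} (Neg A)"
proof -
  have nd: "Dv (insert A S) V {} (Neg (Dx cs x))" using assms(8) by (intro dAssm) simp
  have "Dv (insert A S) V {} (Dx cs x)"
  proof (cases A)
    case (Atom p ts)
    have sp: "spp_axiom cs p (length ts) \<in> insert A S"
      using assms(4,7) Atom by (auto simp: SPP_def)
    have vts: "(\<Union>t\<in>set ts. vars_trm t) \<subseteq> V" using assms(5) Atom by simp
    obtain t where t: "t \<in> set ts" "x \<in> vars_trm t" using assms(1) Atom by auto
    from t(2) have tx: "t = Var x" by (cases t) auto
    have "Dv (insert A S) V {} (in_c cs ts)"
      using dImpE[OF dspp[OF sp vts assms(6)] dAssm[of "Atom p ts"]] Atom by simp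
    then have "Dv (insert A S) V {} (disj_list (map (\<lambda>c. Eq (Var x) (Cst c)) cs))"
      unfolding in_c_def by (rule dconj_E) (use t tx in auto)
    then show ?thesis by (simp add: Dx_def)
  next
    case (Eq s t)
    show ?thesis
    proof (cases s)
      case (Var a)
      show ?thesis
      proof (cases t)
        case (Var b)
        then show ?thesis using assms(1) Eq \<open>s = Var a\<close> by simp
      next
        case (Cst c)
        have "a = x" "c \<in> set cs" using assms(1,3) Eq \<open>t = Cst c\<close> \<open>s = Var a\<close> by auto
        then show ?thesis using Eq \<open>t = Cst c\<close> \<open>s = Var a\<close> by - (rule dDx_I, simp, rule dAssm, simp)
      qed
    next
      case (Cst c)
      show ?thesis
      proof (cases t)
        case (Var b)
        have "b = x" "c \<in> set cs" using assms(1,3) Eq \<open>t = Var b\<close> \<open>s = Cst c\<close> by auto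
        then show ?thesis using Eq \<open>t = Var b\<close> \<open>s = Cst c\<close> by - (rule dDx_I, simp, rule dEq_sym2, rule dAssm, simp)
      next
        case (Cst d)
        then show ?thesis using assms(1) Eq \<open>s = Cst c\<close> by simp
      qed
    qed
  qed (use assms(1,2) in auto)
  then have "Dv (insert A S) V {} FBot" by (rule dImpE[OF nd])
  then show ?thesis by (rule dImpI) (use assms(5) in auto)
qed


lemma dkill:
  fixes G :: "('c, 'p) form"
  assumes "qfree G" "consts_form G \<subseteq> set cs" "preds G \<subseteq> preds F" "fv G \<subseteq> V" "finite V"
    "SPP cs F \<subseteq> S" "Neg (Dx cs x) \<in> S"
  shows "(simpf (kill x G) = FTop \<longrightarrow> Dv S V {} G) \<and> (simpf (kill x G) = FBot \<longrightarrow> Dv S V {} (Neg G))"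
  using assms
proof (induction G arbitrary: S)
  case FBot
  have "Dv S V {} (Neg FBot)" by (rule dImpI, rule dAssm) auto
  then show ?case by simp
next
  case (Atom p ts)
  then show ?case using dkill_atom[of x "Atom p ts" cs F V S] by auto
next
  case (Eq s t)
  then show ?case using dkill_atom[of x "Eq s t" cs F V S] by auto
next
  case (And A B)
  have fA: "fv A \<subseteq> V" and fB: "fv B \<subseteq> V" using And.prems by auto
  have iA: "\<And>S'. SPP cs F \<subseteq> S' \<Longrightarrow> Neg (Dx cs x) \<in> S' \<Longrightarrow>
      (simpf (kill x A) = FTop \<longrightarrow> Dv S' V {} A) \<and> (simpf (kill x A) = FBot \<longrightarrow> Dv S' V {} (Neg A))"
    using And.IH(1) And.prems by auto
  have iB: "\<And>S'. SPP cs F \<subseteq> S' \<Longrightarrow> Neg (Dx cs x) \<in> S' \<Longrightarrow>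
      (simpf (kill x B) = FTop \<longrightarrow> Dv S' V {} B) \<and> (simpf (kill x B) = FBot \<longrightarrow> Dv S' V {} (Neg B))"
    using And.IH(2) And.prems by auto
  let ?S = "insert (And A B) S"
  have s1: "SPP cs F \<subseteq> ?S" "Neg (Dx cs x) \<in> ?S" using And.prems by auto
  show ?case
  proof (intro conjI impI)
    assume "simpf (kill x (And A B)) = FTop"
    then have "simpf (kill x A) = FTop" "simpf (kill x B) = FTop" by (auto simp only: kill.simps simpf_conn)
    then have "Dv S V {} A" "Dv S V {} B" using iA iB And.prems by auto
    then show "Dv S V {} (And A B)" by (rule dAndI)
  next
    assume "simpf (kill x (And A B)) = FBot"
    then have "simpf (kill x A) = FBot \<or> simpf (kill x B) = FBot" by (auto simp only: kill.simps simpf_conn)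
    then have "Dv ?S V {} FBot"
    proof
      assume "simpf (kill x A) = FBot"
      then have "Dv ?S V {} (Neg A)" using iA[OF s1] by auto
      then show ?thesis by (rule dImpE) (rule dAndE1[where B=B], rule dAssm, simp)
    next
      assume "simpf (kill x B) = FBot"
      then have "Dv ?S V {} (Neg B)" using iB[OF s1] by auto
      then show ?thesis by (rule dImpE) (rule dAndE2[where A=A], rule dAssm, simp)
    qed
    then show "Dv S V {} (Neg (And A B))" by (rule dImpI) (use fA fB in auto)
  qed
next
  case (Or A B)
  have fA: "fv A \<subseteq> V" and fB: "fv B \<subseteq> V" using Or.prems by auto
  have iA: "\<And>S'. SPP cs F \<subseteq> S' \<Longrightarrow> Neg (Dx cs x) \<in> S' \<Longrightarrow>
      (simpf (kill x A) = FTop \<longrightarrow> Dv S' V {} A) \<and> (simpf (kill x A) = FBot \<longrightarrow> Dv S' V {} (Neg A))"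
    using Or.IH(1) Or.prems by auto
  have iB: "\<And>S'. SPP cs F \<subseteq> S' \<Longrightarrow> Neg (Dx cs x) \<in> S' \<Longrightarrow>
      (simpf (kill x B) = FTop \<longrightarrow> Dv S' V {} B) \<and> (simpf (kill x B) = FBot \<longrightarrow> Dv S' V {} (Neg B))"
    using Or.IH(2) Or.prems by auto
  let ?S = "insert (Or A B) S"
  have s1: "SPP cs F \<subseteq> ?S" "Neg (Dx cs x) \<in> ?S" using Or.prems by auto
  show ?case
  proof (intro conjI impI)
    assume "simpf (kill x (Or A B)) = FTop"
    then have "simpf (kill x A) = FTop \<or> simpf (kill x B) = FTop" by (auto simp only: kill.simps simpf_conn)
    then show "Dv S V {} (Or A B)"
    proof
      assume "simpf (kill x A) = FTop"
      then have "Dv S V {} A" using iA Or.prems by auto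
      then show ?thesis by (rule dOrI1)
    next
      assume "simpf (kill x B) = FTop"
      then have "Dv S V {} B" using iB Or.prems by auto
      then show ?thesis by (rule dOrI2)
    qed
  next
    assume "simpf (kill x (Or A B)) = FBot"
    then have b: "simpf (kill x A) = FBot" "simpf (kill x B) = FBot" by (auto simp only: kill.simps simpf_conn)
    have s2: "SPP cs F \<subseteq> insert A ?S" "Neg (Dx cs x) \<in> insert A ?S"
      "SPP cs F \<subseteq> insert B ?S" "Neg (Dx cs x) \<in> insert B ?S" using s1 by auto
    have "Dv (insert A ?S) V {} (Neg A)" using iA[OF s2(1,2)] b(1) by auto
    then have c1: "Dv (insert A ?S) V {} FBot" by (rule dImpE) (rule dAssm, simp)
    have "Dv (insert B ?S) V {} (Neg B)" using iB[OF s2(3,4)] b(2) by auto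
    then have c2: "Dv (insert B ?S) V {} FBot" by (rule dImpE) (rule dAssm, simp)
    have "Dv ?S V {} (Or A B)" by (rule dAssm) simp
    then have "Dv ?S V {} FBot"
      using dOrE[OF _ c1 c2] fA fB by simp
    then show "Dv S V {} (Neg (Or A B))" by (rule dImpI) (use fA fB in auto)
  qed
next
  case (Imp A B)
  have fA: "fv A \<subseteq> V" and fB: "fv B \<subseteq> V" using Imp.prems by auto
  have iA: "\<And>S'. SPP cs F \<subseteq> S' \<Longrightarrow> Neg (Dx cs x) \<in> S' \<Longrightarrow>
      (simpf (kill x A) = FTop \<longrightarrow> Dv S' V {} A) \<and> (simpf (kill x A) = FBot \<longrightarrow> Dv S' V {} (Neg A))"
    using Imp.IH(1) Imp.prems by auto
  have iB: "\<And>S'. SPP cs F \<subseteq> S' \<Longrightarrow> Neg (Dx cs x) \<in> S' \<Longrightarrow>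
      (simpf (kill x B) = FTop \<longrightarrow> Dv S' V {} B) \<and> (simpf (kill x B) = FBot \<longrightarrow> Dv S' V {} (Neg B))"
    using Imp.IH(2) Imp.prems by auto
  have s1: "SPP cs F \<subseteq> insert A S" "Neg (Dx cs x) \<in> insert A S" using Imp.prems by auto
  show ?case
  proof (intro conjI impI)
    assume "simpf (kill x (Imp A B)) = FTop"
    then have "simpf (kill x A) = FBot \<or> simpf (kill x B) = FTop" by (auto simp only: kill.simps simpf_conn)
    then have "Dv (insert A S) V {} B"
    proof
      assume "simpf (kill x A) = FBot"
      then have "Dv (insert A S) V {} (Neg A)" using iA[OF s1] by auto
      then have "Dv (insert A S) V {} FBot" by (rule dImpE) (rule dAssm, simp)
      then show ?thesis by (rule dBotE)
    next
      assume "simpf (kill x B) = FTop"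
      then show ?thesis using iB[OF s1] by auto
    qed
    then show "Dv S V {} (Imp A B)" by (rule dImpI) (use fA in auto)
  next
    assume "simpf (kill x (Imp A B)) = FBot"
    then have b: "simpf (kill x A) = FTop" "simpf (kill x B) = FBot" by (auto simp only: kill.simps simpf_conn)
    let ?S = "insert (Imp A B) S"
    have s2: "SPP cs F \<subseteq> ?S" "Neg (Dx cs x) \<in> ?S" using Imp.prems by auto
    have "Dv ?S V {} A" using iA[OF s2] b(1) by auto
    then have "Dv ?S V {} B" by (rule dImpE[OF dAssm, rotated]) simp
    moreover have "Dv ?S V {} (Neg B)" using iB[OF s2] b(2) by auto
    ultimately have "Dv ?S V {} FBot" by (rule dImpE[rotated])
    then show "Dv S V {} (Neg (Imp A B))" by (rule dImpI) (use fA fB in auto)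
  qed
qed auto




lemma Dv_ins: "Dv S V X A \<Longrightarrow> Dv (insert B S) V X A"
  by (erule Dv_mono) auto

lemma Dv_ins2: "Dv S V X A \<Longrightarrow> Dv (insert C (insert B S)) V X A"
  by (erule Dv_mono) auto

definition dir :: "bool \<Rightarrow> ('c, 'p) form \<Rightarrow> ('c, 'p) form \<Rightarrow> ('c, 'p) form" where
  "dir d P Q = (if d then Imp P Q else Imp Q P)"

lemma dimp_And:
  assumes "Dv S V {} (Imp A A')" "Dv S V {} (Imp B B')" "fv (And A B) \<subseteq> V"
  shows "Dv S V {} (Imp (And A B) (And A' B'))"
proof -
  let ?S = "insert (And A B) S"
  have ab: "Dv ?S V {} (And A B)" by (rule dAssm) simp
  have "Dv ?S V {} A'" by (rule dImpE[OF Dv_ins[OF assms(1)] dAndE1[OF ab]])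
  moreover have "Dv ?S V {} B'" by (rule dImpE[OF Dv_ins[OF assms(2)] dAndE2[OF ab]])
  ultimately have "Dv ?S V {} (And A' B')" by (rule dAndI)
  then show ?thesis by (rule dImpI) (use assms(3) in auto)
qed

lemma dimp_Or:
  assumes "Dv S V {} (Imp A A')" "Dv S V {} (Imp B B')" "fv (Or A B) \<subseteq> V"
  shows "Dv S V {} (Imp (Or A B) (Or A' B'))"
proof -
  let ?S = "insert (Or A B) S"
  have ab: "Dv ?S V {} (Or A B)" by (rule dAssm) simp
  have "Dv (insert A ?S) V {} A'" by (rule dImpE[OF Dv_ins2[OF assms(1)]]) (rule dAssm, simp)
  then have c1: "Dv (insert A ?S) V {} (Or A' B')" by (rule dOrI1)
  have "Dv (insert B ?S) V {} B'" by (rule dImpE[OF Dv_ins2[OF assms(2)]]) (rule dAssm, simp)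
  then have c2: "Dv (insert B ?S) V {} (Or A' B')" by (rule dOrI2)
  have "Dv ?S V {} (Or A' B')" using dOrE[OF ab c1 c2] assms(3) by simp
  then show ?thesis by (rule dImpI) (use assms(3) in auto)
qed

lemma dimp_Imp:
  assumes "Dv S V {} (Imp A' A)" "Dv S V {} (Imp B B')" "fv (Imp A B) \<subseteq> V" "fv A' \<subseteq> V"
  shows "Dv S V {} (Imp (Imp A B) (Imp A' B'))"
proof -
  let ?S = "insert A' (insert (Imp A B) S)"
  have "Dv ?S V {} A" by (rule dImpE[OF Dv_ins2[OF assms(1)]]) (rule dAssm, simp)
  then have "Dv ?S V {} B" by (rule dImpE[rotated]) (rule dAssm, simp)
  then have "Dv ?S V {} B'" by (rule dImpE[OF Dv_ins2[OF assms(2)]])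
  then have "Dv (insert (Imp A B) S) V {} (Imp A' B')" by (rule dImpI) (use assms(4) in auto)
  then show ?thesis by (rule dImpI) (use assms(3) in auto)
qed

lemma dir_And:
  "Dv S V {} (dir d A A') \<Longrightarrow> Dv S V {} (dir d B B') \<Longrightarrow> fv (And A B) \<subseteq> V \<Longrightarrow> fv (And A' B') \<subseteq> V
   \<Longrightarrow> Dv S V {} (dir d (And A B) (And A' B'))"
  unfolding dir_def by (cases d) (simp_all add: dimp_And)

lemma dir_Or:
  "Dv S V {} (dir d A A') \<Longrightarrow> Dv S V {} (dir d B B') \<Longrightarrow> fv (Or A B) \<subseteq> V \<Longrightarrow> fv (Or A' B') \<subseteq> V
   \<Longrightarrow> Dv S V {} (dir d (Or A B) (Or A' B'))"
  unfolding dir_def by (cases d) (simp_all add: dimp_Or)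

lemma dir_Imp:
  "Dv S V {} (dir (\<not> d) A A') \<Longrightarrow> Dv S V {} (dir d B B') \<Longrightarrow> fv (Imp A B) \<subseteq> V \<Longrightarrow> fv (Imp A' B') \<subseteq> V
   \<Longrightarrow> Dv S V {} (dir d (Imp A B) (Imp A' B'))"
  unfolding dir_def by (cases d) (simp_all add: dimp_Imp)

lemma dir_refl: "fv A \<subseteq> V \<Longrightarrow> Dv S V {} (dir d A A)"
  unfolding dir_def by (simp, rule dImpI, rule dAssm, simp_all)

lemma dir_Iff: "Dv S V {} (dir True A B) \<Longrightarrow> Dv S V {} (dir False A B) \<Longrightarrow> Dv S V {} (Iff A B)"
  unfolding dir_def by (auto intro: dAndI)

lemma Iff_dir: "Dv S V {} (Iff A B) \<Longrightarrow> Dv S V {} (dir d A B)"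
  unfolding dir_def by (cases d) (auto intro: dAndE1 dAndE2)


section \<open>Replacing weakly restricted subformulas\<close>

definition topc :: "nat \<Rightarrow> bool \<Rightarrow> bool \<Rightarrow> ('c, 'p) form \<Rightarrow> bool" where
  "topc y b \<pi> G \<longleftrightarrow> (simpf (kill y G) = FTop \<and> \<pi> = b) \<or> (simpf (kill y G) = FBot \<and> \<pi> \<noteq> b)"

fun repl :: "nat \<Rightarrow> bool \<Rightarrow> bool \<Rightarrow> ('c, 'p) form \<Rightarrow> ('c, 'p) form" where
  "repl y b \<pi> (And A B) = (if topc y b \<pi> (And A B) then (if \<pi> = b then FTop else FBot)
      else And (repl y b \<pi> A) (repl y b \<pi> B))"
| "repl y b \<pi> (Or A B) = (if topc y b \<pi> (Or A B) then (if \<pi> = b then FTop else FBot)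
      else Or (repl y b \<pi> A) (repl y b \<pi> B))"
| "repl y b \<pi> (Imp A B) = (if topc y b \<pi> (Imp A B) then (if \<pi> = b then FTop else FBot)
      else Imp (repl y b (\<not> \<pi>) A) (repl y b \<pi> B))"
| "repl y b \<pi> G = (if topc y b \<pi> G then (if \<pi> = b then FTop else FBot) else G)"

definition cov :: "nat \<Rightarrow> bool \<Rightarrow> bool \<Rightarrow> ('c, 'p) form \<Rightarrow> bool" where
  "cov y b \<pi> G \<longleftrightarrow> (\<forall>p A. subf_at G p = Some A \<and> is_atomic A \<and> y \<in> fv A \<longrightarrow>
     (\<exists>q r H. p = q @ r \<and> subf_at G q = Some H \<and> topc y b (even (ante_count G q) = \<pi>) H))"

lemma fv_repl: "fv (repl y b \<pi> G) \<subseteq> fv G"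
  by (induction y b \<pi> G rule: repl.induct) auto

lemma cov_child:
  assumes "cov y b \<pi> G" "\<not> topc y b \<pi> G" "\<And>p. subf_at G (i # p) = subf_at C p"
    "\<And>q. ante_count G (i # q) = (if f then Suc (ante_count C q) else ante_count C q)"
  shows "cov y b (if f then \<not> \<pi> else \<pi>) C"
  unfolding cov_def
proof (intro allI impI)
  fix p A assume h: "subf_at C p = Some A \<and> is_atomic A \<and> y \<in> fv A"
  then have "subf_at G (i # p) = Some A \<and> is_atomic A \<and> y \<in> fv A" using assms(3) by simp
  then obtain q r H where qr: "i # p = q @ r" "subf_at G q = Some H" "topc y b (even (ante_count G q) = \<pi>) H"
    using assms(1) unfolding cov_def by blast
  show "\<exists>q r H. p = q @ r \<and> subf_at C q = Some H \<and> topc y b (even (ante_count C q) = (if f then \<not> \<pi> else \<pi>)) H"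
  proof (cases q)
    case Nil
    then show ?thesis using qr assms(2) by simp
  next
    case (Cons j q')
    then have "j = i" "p = q' @ r" using qr(1) by auto
    moreover have "subf_at C q' = Some H" using qr(2) Cons \<open>j = i\<close> assms(3) by simp
    moreover have "(even (ante_count G q) = \<pi>) = (even (ante_count C q') = (if f then \<not> \<pi> else \<pi>))"
      using Cons \<open>j = i\<close> assms(4)[of q'] by (cases f) auto
    then have "topc y b (even (ante_count C q') = (if f then \<not> \<pi> else \<pi>)) H"
      using qr(3) by simp
    ultimately show ?thesis by blast
  qed
qed

lemma cov_And: "cov y b \<pi> (And A B) \<Longrightarrow> \<not> topc y b \<pi> (And A B) \<Longrightarrow> cov y b \<pi> A \<and> cov y b \<pi> B"
  using cov_child[of y b \<pi> "And A B" 0 A False] cov_child[of y b \<pi> "And A B" 1 B False] by auto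

lemma cov_Or: "cov y b \<pi> (Or A B) \<Longrightarrow> \<not> topc y b \<pi> (Or A B) \<Longrightarrow> cov y b \<pi> A \<and> cov y b \<pi> B"
  using cov_child[of y b \<pi> "Or A B" 0 A False] cov_child[of y b \<pi> "Or A B" 1 B False] by auto

lemma cov_Imp: "cov y b \<pi> (Imp A B) \<Longrightarrow> \<not> topc y b \<pi> (Imp A B) \<Longrightarrow> cov y b (\<not> \<pi>) A \<and> cov y b \<pi> B"
  using cov_child[of y b \<pi> "Imp A B" 0 A True] cov_child[of y b \<pi> "Imp A B" 1 B False] by auto

lemma cov_atom: "cov y b \<pi> G \<Longrightarrow> \<not> topc y b \<pi> G \<Longrightarrow> is_atomic G \<Longrightarrow> y \<notin> fv G"
  unfolding cov_def by (auto dest!: spec[of _ "[]"])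

lemma repl_nofv: "qfree G \<Longrightarrow> cov y b \<pi> G \<Longrightarrow> y \<notin> fv (repl y b \<pi> G)"
proof (induction G arbitrary: \<pi>)
  case (And A B)
  then show ?case using cov_And[of y b \<pi> A B] by auto
next
  case (Or A B)
  then show ?case using cov_Or[of y b \<pi> A B] by auto
next
  case (Imp A B)
  then show ?case using cov_Imp[of y b \<pi> A B] by auto
next
  case FBot
  then show ?case by auto
next
  case (Atom p ts)
  then show ?case using cov_atom[of y b \<pi> "Atom p ts"] by auto
next
  case (Eq s t)
  then show ?case using cov_atom[of y b \<pi> "Eq s t"] by auto
qed auto

lemma dtop_iff:
  fixes G :: "('c, 'p) form"
  assumes "topc y b \<pi> G" "qfree G" "consts_form G \<subseteq> set cs" "preds G \<subseteq> preds F" "fv G \<subseteq> V" "finite V"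
    "SPP cs F \<subseteq> S" "Neg (Dx cs y) \<in> S"
  shows "Dv S V {} (Iff G (if \<pi> = b then FTop else FBot))"
proof (cases "\<pi> = b")
  case True
  then have "simpf (kill y G) = FTop" using assms(1) by (auto simp: topc_def)
  then have g: "Dv S V {} G" using dkill[OF assms(2-8)] by auto
  have "Dv S V {} (Imp G FTop)" by (rule dImpI[OF dTop]) (use assms(5) in auto)
  moreover have "Dv S V {} (Imp FTop G)" by (rule dImpI[OF Dv_ins[OF g]]) auto
  ultimately show ?thesis using True by (simp add: dAndI)
next
  case False
  then have "simpf (kill y G) = FBot" using assms(1) by (auto simp: topc_def)
  then have g: "Dv S V {} (Neg G)" using dkill[OF assms(2-8)] by auto
  have "Dv S V {} (Imp FBot G)" by (rule dImpI, rule dBotE, rule dAssm) auto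
  then show ?thesis using False g by (simp add: dAndI)
qed

lemma drepl_iff:
  fixes G :: "('c, 'p) form"
  assumes "qfree G" "consts_form G \<subseteq> set cs" "preds G \<subseteq> preds F" "fv G \<subseteq> V" "finite V"
    "SPP cs F \<subseteq> S" "Neg (Dx cs y) \<in> S"
  shows "Dv S V {} (Iff G (repl y b \<pi> G))"
  using assms
proof (induction G arbitrary: \<pi>)
  case (And A B)
  show ?case
  proof (cases "topc y b \<pi> (And A B)")
    case True
    then show ?thesis using dtop_iff[OF True And.prems] by simp
  next
    case False
    have iA: "Dv S V {} (Iff A (repl y b \<pi> A))" and iB: "Dv S V {} (Iff B (repl y b \<pi> B))"
      using And.IH And.prems by auto
    have f: "fv (And A B) \<subseteq> V" "fv (And (repl y b \<pi> A) (repl y b \<pi> B)) \<subseteq> V"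
      using And.prems fv_repl[of y b \<pi> A] fv_repl[of y b \<pi> B] by auto
    have "Dv S V {} (dir d (And A B) (And (repl y b \<pi> A) (repl y b \<pi> B)))" for d
      by (rule dir_And[OF Iff_dir[OF iA] Iff_dir[OF iB] f])
    then show ?thesis using False by (simp add: dir_Iff)
  qed
next
  case (Or A B)
  show ?case
  proof (cases "topc y b \<pi> (Or A B)")
    case True
    then show ?thesis using dtop_iff[OF True Or.prems] by simp
  next
    case False
    have iA: "Dv S V {} (Iff A (repl y b \<pi> A))" and iB: "Dv S V {} (Iff B (repl y b \<pi> B))"
      using Or.IH Or.prems by auto
    have f: "fv (Or A B) \<subseteq> V" "fv (Or (repl y b \<pi> A) (repl y b \<pi> B)) \<subseteq> V"
      using Or.prems fv_repl[of y b \<pi> A] fv_repl[of y b \<pi> B] by auto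
    have "Dv S V {} (dir d (Or A B) (Or (repl y b \<pi> A) (repl y b \<pi> B)))" for d
      by (rule dir_Or[OF Iff_dir[OF iA] Iff_dir[OF iB] f])
    then show ?thesis using False by (simp add: dir_Iff)
  qed
next
  case (Imp A B)
  show ?case
  proof (cases "topc y b \<pi> (Imp A B)")
    case True
    then show ?thesis using dtop_iff[OF True Imp.prems] by simp
  next
    case False
    have iA: "Dv S V {} (Iff A (repl y b (\<not> \<pi>) A))" and iB: "Dv S V {} (Iff B (repl y b \<pi> B))"
      using Imp.IH Imp.prems by auto
    have f: "fv (Imp A B) \<subseteq> V" "fv (Imp (repl y b (\<not> \<pi>) A) (repl y b \<pi> B)) \<subseteq> V"
      using Imp.prems fv_repl[of y b "\<not> \<pi>" A] fv_repl[of y b \<pi> B] by auto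
    have "Dv S V {} (dir d (Imp A B) (Imp (repl y b (\<not> \<pi>) A) (repl y b \<pi> B)))" for d
      by (rule dir_Imp[OF Iff_dir[OF iA] Iff_dir[OF iB] f])
    then show ?thesis using False by (simp add: dir_Iff)
  qed
next
  case FBot
  show ?case
  proof (cases "topc y b \<pi> (FBot :: ('c, 'p) form)")
    case True
    then show ?thesis using dtop_iff[OF True FBot.prems] by simp
  next
    case False
    then show ?thesis using dIff_refl[of FBot V "{}" S] FBot.prems by simp
  qed
next
  case (Atom p ts)
  show ?case
  proof (cases "topc y b \<pi> (Atom p ts)")
    case True
    then show ?thesis using dtop_iff[OF True Atom.prems] by simp
  next
    case False
    then show ?thesis using dIff_refl[of "Atom p ts" V "{}" S] Atom.prems by simp
  qed
next
  case (Eq s t)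
  show ?case
  proof (cases "topc y b \<pi> (Eq s t :: ('c, 'p) form)")
    case True
    then show ?thesis using dtop_iff[OF True Eq.prems] by simp
  next
    case False
    then show ?thesis using dIff_refl[of "Eq s t" V "{}" S] Eq.prems by simp
  qed
qed auto

lemma dconst_dir: assumes "fv G \<subseteq> V" shows "Dv S V {} (dir d G (if d then FTop else FBot))"
proof (cases d)
  case True
  have "Dv S V {} (Imp G FTop)" by (rule dImpI[OF dTop]) (use assms in auto)
  then show ?thesis using True by (simp add: dir_def)
next
  case False
  have "Dv S V {} (Imp FBot G)" by (rule dImpI, rule dBotE, rule dAssm) auto
  then show ?thesis using False by (simp add: dir_def)
qed

lemma drepl_mono:
  fixes G :: "('c, 'p) form"
  assumes "qfree G" "fv G \<subseteq> V"
  shows "Dv S V {} (dir (\<pi> = b) (subst G y (Cst c)) (subst (repl y b \<pi> G) y (Cst c)))"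
  using assms
proof (induction G arbitrary: \<pi>)
  case (And A B)
  show ?case
  proof (cases "topc y b \<pi> (And A B)")
    case True
    have "fv (subst (And A B) y (Cst c)) \<subseteq> V" using And.prems by auto
    then show ?thesis using True dconst_dir[of "subst (And A B) y (Cst c)" V S "\<pi> = b"] by auto
  next
    case False
    have iA: "Dv S V {} (dir (\<pi> = b) (subst A y (Cst c)) (subst (repl y b \<pi> A) y (Cst c)))"
      and iB: "Dv S V {} (dir (\<pi> = b) (subst B y (Cst c)) (subst (repl y b \<pi> B) y (Cst c)))"
      using And.IH And.prems by auto
    have f: "fv (And (subst A y (Cst c)) (subst B y (Cst c))) \<subseteq> V"
      "fv (And (subst (repl y b \<pi> A) y (Cst c)) (subst (repl y b \<pi> B) y (Cst c))) \<subseteq> V"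
      using And.prems fv_repl[of y b \<pi> A] fv_repl[of y b \<pi> B] by auto
    show ?thesis using dir_And[OF iA iB f] False by simp
  qed
next
  case (Or A B)
  show ?case
  proof (cases "topc y b \<pi> (Or A B)")
    case True
    have "fv (subst (Or A B) y (Cst c)) \<subseteq> V" using Or.prems by auto
    then show ?thesis using True dconst_dir[of "subst (Or A B) y (Cst c)" V S "\<pi> = b"] by auto
  next
    case False
    have iA: "Dv S V {} (dir (\<pi> = b) (subst A y (Cst c)) (subst (repl y b \<pi> A) y (Cst c)))"
      and iB: "Dv S V {} (dir (\<pi> = b) (subst B y (Cst c)) (subst (repl y b \<pi> B) y (Cst c)))"
      using Or.IH Or.prems by auto
    have f: "fv (Or (subst A y (Cst c)) (subst B y (Cst c))) \<subseteq> V"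
      "fv (Or (subst (repl y b \<pi> A) y (Cst c)) (subst (repl y b \<pi> B) y (Cst c))) \<subseteq> V"
      using Or.prems fv_repl[of y b \<pi> A] fv_repl[of y b \<pi> B] by auto
    show ?thesis using dir_Or[OF iA iB f] False by simp
  qed
next
  case (Imp A B)
  show ?case
  proof (cases "topc y b \<pi> (Imp A B)")
    case True
    have "fv (subst (Imp A B) y (Cst c)) \<subseteq> V" using Imp.prems by auto
    then show ?thesis using True dconst_dir[of "subst (Imp A B) y (Cst c)" V S "\<pi> = b"] by auto
  next
    case False
    have "Dv S V {} (dir ((\<not> \<pi>) = b) (subst A y (Cst c)) (subst (repl y b (\<not> \<pi>) A) y (Cst c)))"
      using Imp.IH(1) Imp.prems by auto
    moreover have "((\<not> \<pi>) = b) = (\<not> (\<pi> = b))" by auto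
    ultimately have iA: "Dv S V {} (dir (\<not> (\<pi> = b)) (subst A y (Cst c)) (subst (repl y b (\<not> \<pi>) A) y (Cst c)))"
      by simp
    have iB: "Dv S V {} (dir (\<pi> = b) (subst B y (Cst c)) (subst (repl y b \<pi> B) y (Cst c)))"
      using Imp.IH(2) Imp.prems by auto
    have f: "fv (Imp (subst A y (Cst c)) (subst B y (Cst c))) \<subseteq> V"
      "fv (Imp (subst (repl y b (\<not> \<pi>) A) y (Cst c)) (subst (repl y b \<pi> B) y (Cst c))) \<subseteq> V"
      using Imp.prems fv_repl[of y b "\<not> \<pi>" A] fv_repl[of y b \<pi> B] by auto
    show ?thesis using dir_Imp[OF iA iB f] False by simp
  qed
next
  case FBot
  then show ?case using dconst_dir[of FBot V S "\<pi> = b"] dir_refl[of FBot V S] by auto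
next
  case (Atom p ts)
  have "fv (subst (Atom p ts) y (Cst c)) \<subseteq> V" using Atom by auto
  then show ?case using dconst_dir[of "subst (Atom p ts) y (Cst c)" V S "\<pi> = b"]
      dir_refl[of "subst (Atom p ts) y (Cst c)" V S] by auto
next
  case (Eq s t)
  have "fv (subst (Eq s t) y (Cst c)) \<subseteq> V" using Eq by auto
  then show ?case using dconst_dir[of "subst (Eq s t) y (Cst c)" V S "\<pi> = b"]
      dir_refl[of "subst (Eq s t) y (Cst c)" V S] by auto
qed auto




lemma dprenex_imp:
  assumes "Dv S V {} (Imp A B)" "distinct (map snd qs)" "fv A \<subseteq> V" "fv B \<subseteq> V"
  shows "Dv S V (set (map snd qs)) (Imp (prenex qs A) (prenex qs B))"
  using assms
proof (induction qs arbitrary: S)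
  case Nil
  then show ?case by simp
next
  case (Cons qy qs)
  obtain q y where qy: "qy = (q, y)" by (cases qy)
  let ?X = "insert y (set (map snd qs))"
  let ?PA = "prenex qs A" and ?PB = "prenex qs B"
  have yq: "y \<notin> set (map snd qs)" "distinct (map snd qs)" using Cons.prems(2) qy by auto
  have fPA: "fv ?PA \<subseteq> V" "fv ?PB \<subseteq> V" using Cons.prems(3,4) by auto
  have IH: "Dv S' V (set (map snd qs)) (Imp ?PA ?PB)" if "S \<subseteq> S'" for S'
  proof -
    have "Dv S' V {} (Imp A B)" by (rule Dv_mono[OF Cons.prems(1) that]) simp
    then show ?thesis by (rule Cons.IH[OF _ yq(2) Cons.prems(3,4)])
  qed
  have IHX: "Dv S' V ?X (Imp ?PA ?PB)" if "S \<subseteq> S'" for S'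
    by (rule Dv_mono[OF IH[OF that]]) auto
  show ?case
  proof (cases q)
    case True
    let ?S = "insert (All y ?PA) S"
    have "Dv ?S V ?X (subst ?PA y (Var y))"
      by (rule dAllE, rule dAssm) auto
    then have "Dv ?S V ?X ?PA" by simp
    then have "Dv ?S V ?X ?PB" by (rule dImpE[OF IHX, rotated]) auto
    then have "Dv ?S V ?X (All y ?PB)" by (rule dAllI) simp
    then have "Dv S V ?X (Imp (All y ?PA) (All y ?PB))"
      by (rule dImpI) (use fPA in auto)
    then show ?thesis using True qy by simp
  next
    case False
    let ?S = "insert (Ex y ?PA) S"
    have X: "?X - {y} = set (map snd qs)" using yq by auto
    have "Dv (insert ?PA ?S) V (set (map snd qs)) ?PB"
      by (rule dImpE[OF IH, rotated], rule dAssm) auto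
    then have "Dv (insert ?PA ?S) V (set (map snd qs)) (subst ?PB y (Var y))" by simp
    then have "Dv (insert ?PA ?S) V (set (map snd qs)) (Ex y ?PB)" by (rule dExI) simp
    then have h: "Dv (insert ?PA ?S) V (?X - {y}) (Ex y ?PB)" using X by simp
    have e: "Dv ?S V ?X (Ex y ?PA)" by (rule dAssm) simp
    have "Dv ?S V ?X (Ex y ?PB)"
      by (rule dExE[OF e h]) (use fPA in auto)
    then have "Dv S V ?X (Imp (Ex y ?PA) (Ex y ?PB))"
      by (rule dImpI) (use fPA in auto)
    then show ?thesis using False qy by simp
  qed
qed




lemma is_atomic_subst[simp]: "is_atomic (subst A x t) = is_atomic A"
  by (cases A) auto

lemma subf_at_qfree: "qfree M \<Longrightarrow> subf_at M q = Some H \<Longrightarrow> qfree H"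
proof (induction M arbitrary: q)
qed (case_tac q; auto split: if_splits)+

lemma cov_subst:
  assumes "cov y b \<pi> M" "qfree M" "y \<noteq> x"
  shows "cov y b \<pi> (subst M x (Cst c))"
  unfolding cov_def
proof (intro allI impI)
  fix p A' assume h: "subf_at (subst M x (Cst c)) p = Some A' \<and> is_atomic A' \<and> y \<in> fv A'"
  then obtain A where A: "subf_at M p = Some A" "A' = subst A x (Cst c)"
    using subf_at_subst[OF assms(2)] by auto
  have "is_atomic A" "y \<in> fv A" using h A by auto
  then obtain q r H where qr: "p = q @ r" "subf_at M q = Some H" "topc y b (even (ante_count M q) = \<pi>) H"
    using assms(1) A(1) unfolding cov_def by blast
  have qH: "qfree H" using subf_at_qfree[OF assms(2) qr(2)] .
  have 1: "subf_at (subst M x (Cst c)) q = Some (subst H x (Cst c))"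
    using qr(2) subf_at_subst[OF assms(2)] by simp
  have 2: "ante_count (subst M x (Cst c)) q = ante_count M q" by (rule ante_count_subst)
  have 3: "topc y b (even (ante_count M q) = \<pi>) (subst H x (Cst c))"
    using qr(3) kill_subst_mono[OF qH assms(3), of c] unfolding topc_def by blast
  show "\<exists>q r H. p = q @ r \<and> subf_at (subst M x (Cst c)) q = Some H \<and>
      topc y b (even (ante_count (subst M x (Cst c)) q) = \<pi>) H"
    using qr(1) 1 2 3 by auto
qed

lemma safe_cov:
  assumes "safe_matrix qs M" "(Q, y) \<in> set qs"
  shows "cov y Q True M"
  unfolding cov_def
proof (intro allI impI)
  fix p A assume h: "subf_at M p = Some A \<and> is_atomic A \<and> y \<in> fv A"
  note hh = bspec[OF assms(1)[unfolded safe_matrix_def] assms(2), unfolded prod.case]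
  obtain q r G where qr: "p = q @ r" "subf_at M q = Some G"
     "(if Q then (even (ante_count M q) \<and> pos_weakly_restricted y G)
                   \<or> (odd (ante_count M q) \<and> neg_weakly_restricted y G)
                else (odd (ante_count M q) \<and> pos_weakly_restricted y G)
                   \<or> (even (ante_count M q) \<and> neg_weakly_restricted y G))"
    using hh[rule_format, OF h] by blast
  have "topc y Q (even (ante_count M q) = True) G"
    using qr(3) unfolding topc_def pos_weakly_restricted_def neg_weakly_restricted_def
    by (cases Q) auto
  then show "\<exists>q r H. p = q @ r \<and> subf_at M q = Some H \<and> topc y Q (even (ante_count M q) = True) H"
    using qr(1,2) by blast
qed

lemma consts_prenex[simp]: "consts_form (prenex qs M) = consts_form M"
proof (induction qs)
  case (Cons a qs) then show ?case by (cases a) simp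
qed simp

lemma preds_prenex[simp]: "preds (prenex qs M) = preds M"
proof (induction qs)
  case (Cons a qs) then show ?case by (cases a) simp
qed simp

lemma fv_foldr_All: "fv (foldr All xs B) = fv B - set xs"
  by (induction xs) auto

lemma fv_conj_sub: "(\<And>A. A \<in> set As \<Longrightarrow> fv A \<subseteq> W) \<Longrightarrow> fv (conj_list As) \<subseteq> W"
  by (induction As rule: conj_list.induct) auto

lemma fv_disj_sub: "(\<And>A. A \<in> set As \<Longrightarrow> fv A \<subseteq> W) \<Longrightarrow> fv (disj_list As) \<subseteq> W"
  by (induction As rule: disj_list.induct) auto

lemma fv_in_c: "fv (in_c cs ts) \<subseteq> (\<Union>t\<in>set ts. vars_trm t)"
  unfolding in_c_def
proof (rule fv_conj_sub)
  fix A assume "A \<in> set (map (\<lambda>t. disj_list (map (\<lambda>c. Eq t (Cst c)) cs)) ts)"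
  then obtain t where t: "t \<in> set ts" "A = disj_list (map (\<lambda>c. Eq t (Cst c)) cs)" by auto
  have "fv A \<subseteq> vars_trm t" unfolding t(2) by (rule fv_disj_sub) auto
  then show "fv A \<subseteq> (\<Union>t\<in>set ts. vars_trm t)" using t(1) by blast
qed

lemma fv_spp: "fv (spp_axiom cs p n) = {}"
proof -
  have a: "(\<Union>t\<in>set (map Var [0..<n]). vars_trm t) \<subseteq> set [0..<n]" by auto
  have b: "fv (in_c cs (map Var [0..<n])) \<subseteq> set [0..<n]"
    using fv_in_c[of cs "map Var [0..<n]"] a by (rule subset_trans)
  have c: "fv (Imp (Atom p (map Var [0..<n])) (in_c cs (map Var [0..<n]))) \<subseteq> set [0..<n]"
    using a b by (simp only: fv.simps Un_subset_iff)
  show ?thesis unfolding spp_axiom_def fv_foldr_All using c by (rule Diff_eq_empty_iff[THEN iffD2])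
qed

lemma fvs_SPP: "fvs (SPP cs F) = {}"
  unfolding fvs_def SPP_def by (auto simp: fv_spp)




lemma main:
  fixes M F :: "('c, 'p) form" and cs :: "'c list"
  assumes "qfree M" "distinct (map snd qs)" "fv M \<subseteq> set (map snd qs)" "consts_form M \<subseteq> set cs"
    "preds M \<subseteq> preds F" "\<forall>(Q, y)\<in>set qs. cov y Q True M" "set (map snd qs) \<subseteq> V" "finite V" "cs \<noteq> []"
  shows "Dv (SPP cs F) V (set (map snd qs)) (Iff (ground cs (prenex qs M)) (prenex qs M))"
  using assms
proof (induction qs arbitrary: M)
  case Nil
  have "fv M \<subseteq> V" "fv M \<inter> {} = {}" using Nil.prems(3) by auto
  then show ?case using Nil.prems(1) by (simp add: ground_qfree dIff_refl)
next
  case (Cons Qx qs)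
  obtain Q x where Qx: "Qx = (Q, x)" by (cases Qx)
  let ?SPP = "SPP cs F"
  let ?X' = "set (map snd qs)"
  let ?X = "insert x ?X'"
  let ?P = "prenex qs M"
  let ?Pc = "\<lambda>c. prenex qs (subst M x (Cst c))"
  have xq: "x \<notin> ?X'" "distinct (map snd qs)" using Cons.prems(2) Qx by auto
  have xq': "\<And>a. (a, x) \<notin> set qs" using xq(1) by force
  have xV: "x \<in> V" using Cons.prems(7) Qx by auto
  have Pc: "\<And>c. ?Pc c = subst ?P x (Cst c)" by (rule prenex_subst[OF xq(1)])
  have fvM: "fv M \<subseteq> V" using Cons.prems(3,7) Qx by auto
  have fvP: "fv ?P \<subseteq> {x}" using Cons.prems(3) Qx by auto
  have fvPc: "\<And>c. fv (?Pc c) = {}" using fvP Pc by auto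
  have fvGc: "\<And>c. fv (ground cs (?Pc c)) = {}" using fv_ground fvPc by blast
  have IHc: "Dv ?SPP V ?X' (Iff (ground cs (?Pc c)) (?Pc c))" if c: "c \<in> set cs" for c
  proof (rule Cons.IH)
    show "qfree (subst M x (Cst c))" using Cons.prems(1) by simp
    show "distinct (map snd qs)" by (rule xq(2))
    show "fv (subst M x (Cst c)) \<subseteq> ?X'" using Cons.prems(3) Qx by auto
    show "consts_form (subst M x (Cst c)) \<subseteq> set cs"
      using consts_subst_Cst[of M x c] Cons.prems(4) c by auto
    show "preds (subst M x (Cst c)) \<subseteq> preds F" using Cons.prems(5) by simp
    show "\<forall>(Q, y)\<in>set qs. cov y Q True (subst M x (Cst c))"
    proof (intro ballI)
      fix Qy assume Qy: "Qy \<in> set qs"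
      obtain Q' y where Qy': "Qy = (Q', y)" by (cases Qy)
      have "cov y Q' True M" using Cons.prems(6) Qy Qy' by auto
      moreover have "y \<noteq> x" using xq(1) Qy Qy' by force
      ultimately show "case Qy of (Q, y) \<Rightarrow> cov y Q True (subst M x (Cst c))"
        using cov_subst Cons.prems(1) Qy' by auto
    qed
    show "set (map snd qs) \<subseteq> V" using Cons.prems(7) by auto
    show "finite V" "cs \<noteq> []" using Cons.prems(8,9) by auto
  qed
  define R where "R = repl x Q True M"
  have covx: "cov x Q True M" using Cons.prems(6) Qx by auto
  have xR: "x \<notin> fv R" unfolding R_def by (rule repl_nofv[OF Cons.prems(1) covx])
  have fvR: "fv R \<subseteq> V" using fv_repl[of x Q True M] fvM unfolding R_def by auto
  have RI: "Dv S V {} (Iff M R)" if "?SPP \<subseteq> S" "Neg (Dx cs x) \<in> S" for S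
    unfolding R_def by (rule drepl_iff[OF Cons.prems(1,4,5) fvM Cons.prems(8) that])
  have RM: "Dv S V {} (dir (True = Q) (subst M x (Cst c)) R)" for S c
    using drepl_mono[OF Cons.prems(1) fvM, of S True Q x c] subst_nofv[OF xR] unfolding R_def by simp
  have fvMc: "\<And>c. fv (subst M x (Cst c)) \<subseteq> V" using fvM by auto
  have c0: "hd cs \<in> set cs" using Cons.prems(9) by simp
  have em: "Dv S V ?X' (Or (Dx cs x) (Neg (Dx cs x)))" for S
    unfolding Dx_def by (rule ddisj_em) (use xV xq' dDE in auto)
  have fvD: "fv (Dx cs x) \<subseteq> V" "fv (Dx cs x) \<inter> ?X' = {}" using fv_Dx[of cs x] xV xq(1) by auto
  show ?case
  proof (cases Q)
    case True
    let ?Gs = "map (\<lambda>c. ground cs (?Pc c)) cs"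
    have gr: "ground cs (prenex (Qx # qs) M) = conj_list ?Gs" using True Qx Pc by simp
    have fvGs: "fv (conj_list ?Gs) = {}" using fv_conj_list[of ?Gs] fvGc by auto
    let ?S1 = "insert (conj_list ?Gs) ?SPP"
    have hc: "Dv ?S1 V ?X' (?Pc c)" if c: "c \<in> set cs" for c
    proof -
      have "Dv ?S1 V ?X' (ground cs (?Pc c))" by (rule dconj_E[OF dAssm]) (use c in auto)
      then show "Dv ?S1 V ?X' (?Pc c)" by (rule dIffE1[OF Dv_ins[OF IHc[OF c]]])
    qed
    let ?S2 = "insert (Dx cs x) ?S1"
    have case1: "Dv ?S2 V ?X' ?P"
    proof -
      have d: "Dv ?S2 V ?X' (disj_list (map (\<lambda>c. Eq (Var x) (Cst c)) cs))"
        by (rule dAssm) (simp add: Dx_def)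
      show ?thesis
      proof (rule ddisj_E[OF d])
        fix A :: "('c, 'p) form" assume "A \<in> set (map (\<lambda>c. Eq (Var x) (Cst c)) cs)"
        then obtain c where c: "c \<in> set cs" "A = Eq (Var x) (Cst c)" by auto
        let ?S3 = "insert A ?S2"
        have e: "Dv ?S3 V ?X' (Eq (Cst c) (Var x))" using c by (intro dEq_sym dAssm) simp
        have "Dv ?S3 V ?X' (?Pc c)" by (rule Dv_mono[OF hc[OF c(1)]]) auto
        then have "Dv ?S3 V ?X' (subst ?P x (Cst c))" using Pc by simp
        then have "Dv ?S3 V ?X' (subst ?P x (Var x))" by (rule dEqSubst[OF e]) auto
        then show "Dv ?S3 V ?X' ?P \<and> fv A \<subseteq> V \<and> fv A \<inter> ?X' = {}" using c xV xq(1) by simp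
      qed
    qed
    let ?S2' = "insert (Neg (Dx cs x)) ?S1"
    have case2: "Dv ?S2' V ?X' ?P"
    proof -
      have a: "Dv ?S2' V ?X' (?Pc (hd cs))" by (rule Dv_ins[OF hc[OF c0]])
      have "Dv ?S2' V {} (Imp (subst M x (Cst (hd cs))) R)" using RM[of ?S2' "hd cs"] True by (simp add: dir_def)
      then have b: "Dv ?S2' V ?X' (Imp (?Pc (hd cs)) (prenex qs R))" by (rule dprenex_imp[OF _ xq(2) fvMc fvR])
      have "Dv ?S2' V {} (Iff M R)" by (rule RI) auto
      then have "Dv ?S2' V {} (Imp R M)" by (rule dAndE2)
      then have c: "Dv ?S2' V ?X' (Imp (prenex qs R) ?P)" by (rule dprenex_imp[OF _ xq(2) fvR fvM])
      show ?thesis by (rule dImpE[OF c dImpE[OF b a]])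
    qed
    have "Dv ?S1 V ?X' ?P" by (rule dOrE[OF em case1 case2]) (use fvD in auto)
    then have "Dv ?S1 V ?X ?P" by (rule Dv_mono) auto
    then have "Dv ?S1 V ?X (All x ?P)" by (rule dAllI) simp
    then have dir1: "Dv ?SPP V ?X (Imp (conj_list ?Gs) (All x ?P))" by (rule dImpI) (use fvGs in auto)
    let ?T = "insert (All x ?P) ?SPP"
    have "Dv ?T V ?X (conj_list ?Gs)"
    proof (rule dconj_I)
      fix A assume "A \<in> set ?Gs"
      then obtain c where c: "c \<in> set cs" "A = ground cs (?Pc c)" by auto
      have "Dv ?T V ?X (subst ?P x (Cst c))" by (rule dAllE, rule dAssm) auto
      then have "Dv ?T V ?X (?Pc c)" using Pc by simp
      moreover have "Dv ?T V ?X (Iff (ground cs (?Pc c)) (?Pc c))" by (rule Dv_mono[OF IHc[OF c(1)]]) auto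
      ultimately show "Dv ?T V ?X A" using c(2) dIffE2 by blast
    qed
    then have dir2: "Dv ?SPP V ?X (Imp (All x ?P) (conj_list ?Gs))" by (rule dImpI) (use fvP in auto)
    show ?thesis using dAndI[OF dir1 dir2] gr True Qx by simp
  next
    case False
    let ?Gs = "map (\<lambda>c. ground cs (?Pc c)) cs"
    have gr: "ground cs (prenex (Qx # qs) M) = disj_list ?Gs" using False Qx Pc by simp
    have fvGs: "fv (disj_list ?Gs) = {}" using fv_disj_list[of ?Gs] fvGc by auto
    let ?S1 = "insert (disj_list ?Gs) ?SPP"
    have "Dv ?S1 V ?X (Ex x ?P)"
    proof (rule ddisj_E[OF dAssm])
      show "disj_list ?Gs \<in> ?S1" by simp
    next
      fix A assume "A \<in> set ?Gs"
      then obtain c where c: "c \<in> set cs" "A = ground cs (?Pc c)" by auto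
      have i: "Dv (insert A ?S1) V ?X (Iff (ground cs (?Pc c)) (?Pc c))"
        by (rule Dv_mono[OF IHc[OF c(1)]]) auto
      have "Dv (insert A ?S1) V ?X (?Pc c)" by (rule dIffE1[OF i], rule dAssm) (simp add: c(2))
      then have "Dv (insert A ?S1) V ?X (subst ?P x (Cst c))" using Pc by simp
      then have "Dv (insert A ?S1) V ?X (Ex x ?P)" by (rule dExI) simp
      then show "Dv (insert A ?S1) V ?X (Ex x ?P) \<and> fv A \<subseteq> V \<and> fv A \<inter> ?X = {}"
        using c fvGc by simp
    qed
    then have dir1: "Dv ?SPP V ?X (Imp (disj_list ?Gs) (Ex x ?P))" by (rule dImpI) (use fvGs in auto)
    let ?T = "insert (Ex x ?P) ?SPP"
    let ?T2 = "insert ?P ?T"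
    let ?S3 = "insert (Dx cs x) ?T2"
    have case1: "Dv ?S3 V ?X' (disj_list ?Gs)"
    proof -
      have d: "Dv ?S3 V ?X' (disj_list (map (\<lambda>c. Eq (Var x) (Cst c)) cs))"
        by (rule dAssm) (simp add: Dx_def)
      show ?thesis
      proof (rule ddisj_E[OF d])
        fix A :: "('c, 'p) form" assume "A \<in> set (map (\<lambda>c. Eq (Var x) (Cst c)) cs)"
        then obtain c where c: "c \<in> set cs" "A = Eq (Var x) (Cst c)" by auto
        let ?S4 = "insert A ?S3"
        have e: "Dv ?S4 V ?X' (Eq (Var x) (Cst c))" using c by (intro dAssm) simp
        have "Dv ?S4 V ?X' (subst ?P x (Var x))" by (simp, rule dAssm) simp
        then have "Dv ?S4 V ?X' (subst ?P x (Cst c))" by (rule dEqSubst[OF e]) auto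
        then have pc: "Dv ?S4 V ?X' (?Pc c)" using Pc by simp
        have i: "Dv ?S4 V ?X' (Iff (ground cs (?Pc c)) (?Pc c))" by (rule Dv_mono[OF IHc[OF c(1)]]) auto
        have "Dv ?S4 V ?X' (ground cs (?Pc c))" by (rule dIffE2[OF i pc])
        then have "Dv ?S4 V ?X' (disj_list ?Gs)" by (rule ddisj_I[rotated]) (use c in auto)
        then show "Dv ?S4 V ?X' (disj_list ?Gs) \<and> fv A \<subseteq> V \<and> fv A \<inter> ?X' = {}" using c xV xq(1) by simp
      qed
    qed
    let ?S3' = "insert (Neg (Dx cs x)) ?T2"
    have case2: "Dv ?S3' V ?X' (disj_list ?Gs)"
    proof -
      have "Dv ?S3' V {} (Iff M R)" by (rule RI) auto
      then have "Dv ?S3' V {} (Imp M R)" by (rule dAndE1)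
      then have a: "Dv ?S3' V ?X' (Imp ?P (prenex qs R))" by (rule dprenex_imp[OF _ xq(2) fvM fvR])
      have "Dv ?S3' V ?X' ?P" by (rule dAssm) simp
      then have r: "Dv ?S3' V ?X' (prenex qs R)" by (rule dImpE[OF a])
      have "Dv ?S3' V {} (Imp R (subst M x (Cst (hd cs))))" using RM[of ?S3' "hd cs"] False by (simp add: dir_def)
      then have b: "Dv ?S3' V ?X' (Imp (prenex qs R) (?Pc (hd cs)))" by (rule dprenex_imp[OF _ xq(2) fvR fvMc])
      have pc: "Dv ?S3' V ?X' (?Pc (hd cs))" by (rule dImpE[OF b r])
      have i: "Dv ?S3' V ?X' (Iff (ground cs (?Pc (hd cs))) (?Pc (hd cs)))" by (rule Dv_mono[OF IHc[OF c0]]) auto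
      have "Dv ?S3' V ?X' (ground cs (?Pc (hd cs)))" by (rule dIffE2[OF i pc])
      then show ?thesis by (rule ddisj_I[rotated]) (use c0 in auto)
    qed
    have h: "Dv ?T2 V ?X' (disj_list ?Gs)" by (rule dOrE[OF em case1 case2]) (use fvD in auto)
    have X: "?X - {x} = ?X'" using xq(1) by auto
    have e: "Dv ?T V ?X (Ex x ?P)" by (rule dAssm) simp
    have "Dv ?T V ?X (disj_list ?Gs)"
      by (rule dExE[OF e]) (use h X fvGs fvP xV in auto)
    then have dir2: "Dv ?SPP V ?X (Imp (Ex x ?P) (disj_list ?Gs))" by (rule dImpI) (use fvP in auto)
    show ?thesis using dAndI[OF dir1 dir2] gr False Qx by simp
  qed
qed

theorem proposition2:
  fixes F :: "('c, 'p) form" and cs :: "'c list"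
  assumes "safe F"
    and "cs \<noteq> []"
    and "consts_form F \<subseteq> set cs"
  shows "SPP cs F \<turnstile>\<^sub>D\<^sub>E Iff (ground cs F) F"
proof -
  from assms(1) obtain qs M where F: "F = prenex qs M" "qfree M" "distinct (map snd qs)" "sentence F"
      "safe_matrix qs M"
    unfolding safe_def by blast
  have fvM: "fv M \<subseteq> set (map snd qs)" using F(1,4) by (auto simp: sentence_def)
  have cM: "consts_form M \<subseteq> set cs" using assms(3) F(1) by simp
  have pM: "preds M \<subseteq> preds F" using F(1) by simp
  have cov: "\<forall>(Q, y)\<in>set qs. cov y Q True M" using safe_cov[OF F(5)] by auto
  have "Dv (SPP cs F) (set (map snd qs)) (set (map snd qs)) (Iff (ground cs (prenex qs M)) (prenex qs M))"
    by (rule main[OF F(2,3) fvM cM pM cov]) (use assms(2) in auto)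
  then have "SPP cs F \<turnstile>\<^sub>D\<^sub>E Iff (ground cs (prenex qs M)) (prenex qs M)"
    by (rule Dv_use) (auto simp: fvs_SPP)
  then show ?thesis using F(1) by simp
qed

end
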